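(* A function $\phi:\mathbb{Z}\to\mathbb{H}$ is positive definite if and only if there exists a (not necessarily unique) nonnegative finite Radon measure $\mu$ on $\mathbb{S}$ such that $$\phi(n)=\int_{\mathbb{S}} s^n\,d\mu(s)\quad\text{for all } n\in\mathbb{Z}.$$
   Context: $\mathbb{H}$ is the real quaternion algebra and $\mathbb{S}=\{q\in\mathbb{H}:|q|=1\}$, the unit 3-sphere, with its usual topology. A function $\phi:\mathbb{Z}\to\mathbb{H}$ is positive definite if for all $k$, $n_1,\dots,n_k\in\mathbb{Z}$ and $q_1,\dots,q_k\in\mathbb{H}$, $\sum_{i,j=1}^k\overline{q_i}\,\phi(n_j-n_i)\,q_j$ is a nonnegative real number. The integral of the $\mathbb{H}$-valued continuous function $s\mapsto s^n$ is taken componentwise. *)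

theory Defs
  imports "HOL-Analysis.Analysis"
begin

text \<open>Real quaternions a + b i + c j + d k, represented as 4-tuples of reals.
  The product type carries the Euclidean vector-space structure
  (componentwise addition, Euclidean norm, Borel sigma-algebra).\<close>
type_synonym quat = "real \<times> real \<times> real \<times> real"

fun qmult :: "quat \<Rightarrow> quat \<Rightarrow> quat" (infixl "\<star>" 70) where
  "qmult (a1, b1, c1, d1) (a2, b2, c2, d2) =
     (a1*a2 - b1*b2 - c1*c2 - d1*d2,
      a1*b2 + b1*a2 + c1*d2 - d1*c2,
      a1*c2 - b1*d2 + c1*a2 + d1*b2,
      a1*d2 + b1*c2 - c1*b2 + d1*a2)"

fun qconj :: "quat \<Rightarrow> quat" where
  "qconj (a, b, c, d) = (a, -b, -c, -d)"

definition qone :: quat where "qone = (1, 0, 0, 0)"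

text \<open>Multiplicative inverse (q^{-1} = conj q / |q|^2; 0 for q = 0).\<close>
definition qinv :: "quat \<Rightarrow> quat" where
  "qinv q = (inverse ((norm q)^2)) *\<^sub>R qconj q"

primrec qpow :: "quat \<Rightarrow> nat \<Rightarrow> quat" where
  "qpow q 0 = qone"
| "qpow q (Suc n) = qmult (qpow q n) q"

definition qpowi :: "quat \<Rightarrow> int \<Rightarrow> quat" where
  "qpowi q n = (if 0 \<le> n then qpow q (nat n) else qpow (qinv q) (nat (- n)))"

definition qsphere :: "quat set" where
  "qsphere = {q. norm q = 1}"

definition is_nonneg_real :: "quat \<Rightarrow> bool" where
  "is_nonneg_real q \<longleftrightarrow> (\<exists>r::real. r \<ge> 0 \<and> q = (r, 0, 0, 0))"

definition positive_definite :: "(int \<Rightarrow> quat) \<Rightarrow> bool" where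
  "positive_definite \<phi> \<longleftrightarrow>
     (\<forall>(k::nat) (n::nat \<Rightarrow> int) (q::nat \<Rightarrow> quat).
        is_nonneg_real (\<Sum>i<k. \<Sum>j<k. qmult (qmult (qconj (q i)) (\<phi> (n j - n i))) (q j)))"

end

theory Submission
  imports Defs "HOL-Probability.Probability"
begin

lemma qnorm_sq: "(norm ((a,b,c,d)::quat))^2 = a^2+b^2+c^2+d^2"
  by (simp add: norm_Pair)

lemma qnorm: "norm ((a,b,c,d)::quat) = sqrt (a^2+b^2+c^2+d^2)"
  by (simp add: norm_Pair)

lemma qnorm_sq2: "norm ((a,b,c,d)::quat) * norm ((a,b,c,d)::quat) = a*a+(b*b+(c*c+d*d))"
  using qnorm_sq[of a b c d] by (simp add: power2_eq_square)

lemma qmult_assoc: "qmult (qmult p q) r = qmult p (qmult q r)"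
  by (cases p rule: prod_cases4; cases q rule: prod_cases4; cases r rule: prod_cases4)
     (simp add: algebra_simps)

lemma qconj_mult: "qconj (qmult p q) = qmult (qconj q) (qconj p)"
  by (cases p rule: prod_cases4; cases q rule: prod_cases4) (simp add: algebra_simps)

lemma qconj_qconj[simp]: "qconj (qconj p) = p"
  by (cases p rule: prod_cases4) simp

lemma qmult_one_left[simp]: "qmult qone p = p"
  by (cases p rule: prod_cases4) (simp add: qone_def)

lemma qmult_one_right[simp]: "qmult p qone = p"
  by (cases p rule: prod_cases4) (simp add: qone_def)

lemma qconj_one[simp]: "qconj qone = qone"
  by (simp add: qone_def)

lemma qmult_add_left: "qmult (p + q) r = qmult p r + qmult q r"
  by (cases p rule: prod_cases4; cases q rule: prod_cases4; cases r rule: prod_cases4)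
     (simp add: algebra_simps)

lemma qmult_add_right: "qmult r (p + q) = qmult r p + qmult r q"
  by (cases p rule: prod_cases4; cases q rule: prod_cases4; cases r rule: prod_cases4)
     (simp add: algebra_simps)

lemma qmult_scaleR_left: "qmult (c *\<^sub>R p) r = c *\<^sub>R qmult p r"
  by (cases p rule: prod_cases4; cases r rule: prod_cases4) (simp add: algebra_simps)

lemma qmult_scaleR_right: "qmult r (c *\<^sub>R p) = c *\<^sub>R qmult r p"
  by (cases p rule: prod_cases4; cases r rule: prod_cases4) (simp add: algebra_simps)

lemma qmult_zero_left[simp]: "qmult 0 p = 0"
  by (cases p rule: prod_cases4) (simp add: zero_prod_def)

lemma qmult_zero_right[simp]: "qmult p 0 = 0"
  by (cases p rule: prod_cases4) (simp add: zero_prod_def)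

lemma qconj_add: "qconj (p + q) = qconj p + qconj q"
  by (cases p rule: prod_cases4; cases q rule: prod_cases4) simp

lemma qconj_zero[simp]: "qconj 0 = 0"
  by (simp add: zero_prod_def)

lemma qconj_sum: "qconj (\<Sum>i\<in>A. f i) = (\<Sum>i\<in>A. qconj (f i))"
  by (induction A rule: infinite_finite_induct) (auto simp: qconj_add)

lemma qmult_sum_left: "qmult (\<Sum>i\<in>A. f i) r = (\<Sum>i\<in>A. qmult (f i) r)"
  by (induction A rule: infinite_finite_induct) (auto simp: qmult_add_left)

lemma qmult_sum_right: "qmult r (\<Sum>i\<in>A. f i) = (\<Sum>i\<in>A. qmult r (f i))"
  by (induction A rule: infinite_finite_induct) (auto simp: qmult_add_right)

lemma qconj_mult_self: "qmult (qconj p) p = ((norm p)^2, 0, 0, 0)"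
  by (cases p rule: prod_cases4) (simp add: qnorm_sq2 algebra_simps power2_eq_square)

lemma qmult_self_conj: "qmult p (qconj p) = ((norm p)^2, 0, 0, 0)"
  by (cases p rule: prod_cases4) (simp add: qnorm_sq2 algebra_simps power2_eq_square)

lemma qnorm_mult: "norm (qmult p q) = norm p * norm q"
proof -
  have "(norm (qmult p q))^2 = (norm p * norm q)^2"
  proof -
    obtain a b c d where p: "p = (a,b,c,d)" by (cases p rule: prod_cases4)
    obtain e f g h where q: "q = (e,f,g,h)" by (cases q rule: prod_cases4)
    show ?thesis unfolding p q qmult.simps qnorm_sq power_mult_distrib by algebra
  qed
  then show ?thesis by (simp add: power2_eq_iff_nonneg)
qed

lemma qnorm_conj[simp]: "norm (qconj p) = norm p"
  by (cases p rule: prod_cases4) (simp add: qnorm)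

lemma qinv_unit: "norm s = 1 \<Longrightarrow> qinv s = qconj s"
  by (simp add: qinv_def)

lemma qone_unit: "qmult (qconj s) s = qone" "qmult s (qconj s) = qone" if "norm s = 1"
  using that by (simp_all add: qconj_mult_self qmult_self_conj qone_def)

lemma qnorm_one[simp]: "norm qone = 1"
  by (simp add: qone_def qnorm)

lemma qnorm_qpow: "norm s = 1 \<Longrightarrow> norm (qpow s n) = 1"
  by (induction n) (auto simp: qnorm_mult)

lemma qnorm_qpowi: "norm s = 1 \<Longrightarrow> norm (qpowi s n) = 1"
  by (auto simp: qpowi_def qnorm_qpow qinv_unit)

lemma qpowi_step: assumes "norm s = 1" shows "qpowi s (n + 1) = qmult (qpowi s n) s"
proof (cases "n \<ge> 0")
  case True
  then have "nat (n+1) = Suc (nat n)" by simp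
  then show ?thesis using True by (simp add: qpowi_def)
next
  case False
  define k where "k = nat (-n-1)"
  have k: "n = - int k - 1" using False by (simp add: k_def)
  have e: "nat (- n) = Suc k" using k by simp
  show ?thesis
  proof (cases "k = 0")
    case True
    then show ?thesis using k assms by (simp add: qpowi_def qinv_unit qone_unit)
  next
    case False
    then have "n + 1 < 0" using k by simp
    moreover have "nat (-(n+1)) = k" using k by simp
    ultimately have "qpowi s (n+1) = qpow (qconj s) k" using assms by (simp add: qpowi_def qinv_unit)
    moreover have "qpowi s n = qmult (qpow (qconj s) k) (qconj s)" using assms False \<open>n+1<0\<close>
      by (simp add: qpowi_def qinv_unit e)
    ultimately show ?thesis using assms by (simp add: qmult_assoc qone_unit)
  qed
qed

lemma qpowi_zero[simp]: "qpowi s 0 = qone"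
  by (simp add: qpowi_def)

lemma qpowi_add: assumes "norm s = 1" shows "qpowi s (n + m) = qmult (qpowi s n) (qpowi s m)"
proof (induction m rule: int_induct[where k=0])
  case base then show ?case by simp
next
  case (step1 i)
  then show ?case using qpowi_step[OF assms, of "n+i"] qpowi_step[OF assms, of i]
    by (simp add: add.assoc[symmetric] qmult_assoc)
next
  case (step2 i)
  have a: "qpowi s (i - 1) = qmult (qpowi s i) (qconj s)"
    using qpowi_step[OF assms, of "i-1"] assms by (simp add: qmult_assoc qone_unit)
  have b: "qpowi s (n + (i - 1)) = qmult (qpowi s (n + i)) (qconj s)"
    using qpowi_step[OF assms, of "n+i-1"] assms by (simp add: qmult_assoc qone_unit algebra_simps)
  show ?case using step2 a b by (simp add: qmult_assoc)
qed

lemma qinv_unique: assumes "qmult x y = qone" "norm x = 1" shows "y = qconj x"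
proof -
  have "y = qmult (qmult (qconj x) x) y" using assms by (simp add: qone_unit)
  also have "\<dots> = qconj x" using assms by (simp add: qmult_assoc)
  finally show ?thesis .
qed

lemma qpowi_neg: assumes "norm s = 1" shows "qpowi s (- n) = qconj (qpowi s n)"
  using qinv_unique[of "qpowi s n" "qpowi s (-n)"] qpowi_add[OF assms, of n "-n"] qnorm_qpowi[OF assms]
  by simp

lemma qpowi_diff: assumes "norm s = 1"
  shows "qpowi s (m - n) = qmult (qconj (qpowi s n)) (qpowi s m)"
  using qpowi_add[OF assms, of "-n" m] qpowi_neg[OF assms, of n] by simp


lemma qmult_eq: "qmult p q =
  (fst p * fst q - fst (snd p) * fst (snd q) - fst (snd (snd p)) * fst (snd (snd q)) - snd (snd (snd p)) * snd (snd (snd q)),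
   fst p * fst (snd q) + fst (snd p) * fst q + fst (snd (snd p)) * snd (snd (snd q)) - snd (snd (snd p)) * fst (snd (snd q)),
   fst p * fst (snd (snd q)) - fst (snd p) * snd (snd (snd q)) + fst (snd (snd p)) * fst q + snd (snd (snd p)) * fst (snd q),
   fst p * snd (snd (snd q)) + fst (snd p) * fst (snd (snd q)) - fst (snd (snd p)) * fst (snd q) + snd (snd (snd p)) * fst q)"
  by (cases p rule: prod_cases4; cases q rule: prod_cases4) simp

lemma qconj_eq: "qconj p = (fst p, - fst (snd p), - fst (snd (snd p)), - snd (snd (snd p)))"
  by (cases p rule: prod_cases4) simp

lemma borel_measurable_fst_q[measurable (raw)]:
  fixes f :: "'a \<Rightarrow> ('b::second_countable_topology \<times> 'c::second_countable_topology)"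
  shows "f \<in> borel_measurable M \<Longrightarrow> (\<lambda>x. fst (f x)) \<in> borel_measurable M"
  by (rule borel_measurable_continuous_on[OF continuous_on_fst[OF continuous_on_id]])

lemma borel_measurable_snd_q[measurable (raw)]:
  fixes f :: "'a \<Rightarrow> ('b::second_countable_topology \<times> 'c::second_countable_topology)"
  shows "f \<in> borel_measurable M \<Longrightarrow> (\<lambda>x. snd (f x)) \<in> borel_measurable M"
  by (rule borel_measurable_continuous_on[OF continuous_on_snd[OF continuous_on_id]])

lemma measurable_qmult[measurable]:
  assumes [measurable]: "f \<in> borel_measurable M" "g \<in> borel_measurable M"
  shows "(\<lambda>x. qmult (f x) (g x)) \<in> borel_measurable M"
  unfolding qmult_eq by measurable

lemma measurable_qconj[measurable]:
  assumes [measurable]: "f \<in> borel_measurable M"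
  shows "(\<lambda>x. qconj (f x)) \<in> borel_measurable M"
  unfolding qconj_eq by measurable

lemma measurable_qinv[measurable]:
  assumes [measurable]: "f \<in> borel_measurable M"
  shows "(\<lambda>x. qinv (f x)) \<in> borel_measurable M"
  unfolding qinv_def by measurable

lemma measurable_qpow[measurable]:
  assumes [measurable]: "f \<in> borel_measurable M"
  shows "(\<lambda>x. qpow (f x) n) \<in> borel_measurable M"
  by (induction n) (simp_all add: qone_def)

lemma measurable_qpowi[measurable]:
  assumes [measurable]: "f \<in> borel_measurable M"
  shows "(\<lambda>x. qpowi (f x) n) \<in> borel_measurable M"
  unfolding qpowi_def by (cases "0 \<le> n") simp_all

lemma linear_qmult_left: "bounded_linear (\<lambda>x. qmult c x)"
  by (rule linear_conv_bounded_linear[THEN iffD1], rule linearI)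
     (simp_all add: qmult_add_right qmult_scaleR_right)

lemma linear_qmult_right: "bounded_linear (\<lambda>x. qmult x c)"
  by (rule linear_conv_bounded_linear[THEN iffD1], rule linearI)
     (simp_all add: qmult_add_left qmult_scaleR_left)

lemma quat_integral:
  fixes f :: "'a \<Rightarrow> quat"
  assumes "integrable M f"
  shows "integral\<^sup>L M f = (integral\<^sup>L M (\<lambda>x. fst (f x)), integral\<^sup>L M (\<lambda>x. fst (snd (f x))),
     integral\<^sup>L M (\<lambda>x. fst (snd (snd (f x)))), integral\<^sup>L M (\<lambda>x. snd (snd (snd (f x)))))"
  using assms by (simp add: integrable_snd)

lemma qnorm_real: "norm ((a,0,0,0)::quat) = \<bar>a\<bar>"
  by (simp add: qnorm)

lemma in_qsphere: "x \<in> qsphere \<longleftrightarrow> norm x = 1"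
  by (simp add: qsphere_def)

lemma closed_qsphere: "closed qsphere"
  unfolding qsphere_def by (rule closed_Collect_eq) (auto intro: continuous_intros)

lemma integrable_qpowi:
  assumes "sets \<mu> = sets borel" "finite_measure \<mu>" "emeasure \<mu> (- qsphere) = 0"
  shows "integrable \<mu> (\<lambda>s. qpowi s n)"
proof -
  interpret finite_measure \<mu> by fact
  have ae: "AE s in \<mu>. norm s = 1"
    by (rule AE_I[where N="- qsphere"]) (auto simp: assms in_qsphere intro!: borel_open open_Compl closed_qsphere)
  show ?thesis
    by (rule integrable_const_bound[where B=1])
       (use ae in \<open>auto simp: qnorm_qpowi measurable_cong_sets[OF assms(1) refl]\<close>)
qed

lemma ae_qsphere:
  assumes "sets \<mu> = sets borel" "emeasure \<mu> (- qsphere) = 0"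
  shows "AE s in \<mu>. norm s = 1"
  by (rule AE_I[where N="- qsphere"]) (auto simp: assms in_qsphere intro!: borel_open open_Compl closed_qsphere)

lemma easy_direction:
  fixes \<phi> :: "int \<Rightarrow> quat"
  assumes S: "sets \<mu> = sets borel" and F: "finite_measure \<mu>" and N: "emeasure \<mu> (- qsphere) = 0"
    and phi: "\<And>n. \<phi> n = integral\<^sup>L \<mu> (\<lambda>s. qpowi s n)"
  shows "positive_definite \<phi>"
  unfolding positive_definite_def
proof (intro allI)
  fix k :: nat and n :: "nat \<Rightarrow> int" and q :: "nat \<Rightarrow> quat"
  interpret finite_measure \<mu> by fact
  have int: "integrable \<mu> (\<lambda>s. qpowi s m)" for m by (rule integrable_qpowi[OF S F N])
  define X where "X s = (\<Sum>j<k. qmult (qpowi s (n j)) (q j))" for s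
  define G where "G s = (\<Sum>i<k. \<Sum>j<k. qmult (qmult (qconj (q i)) (qpowi s (n j - n i))) (q j))" for s
  have intG: "integrable \<mu> (\<lambda>s. qmult (qmult c (qpowi s m)) d)" for c d m
    by (intro integrable_bounded_linear[OF linear_qmult_right] integrable_bounded_linear[OF linear_qmult_left] int)
  have "(\<Sum>i<k. \<Sum>j<k. qmult (qmult (qconj (q i)) (\<phi> (n j - n i))) (q j)) = integral\<^sup>L \<mu> G"
  proof -
    have e: "integral\<^sup>L \<mu> (\<lambda>s. qmult (qmult c (qpowi s m)) d) = qmult (qmult c (integral\<^sup>L \<mu> (\<lambda>s. qpowi s m))) d" for c d m
      using integral_bounded_linear[OF linear_qmult_right, of \<mu> "\<lambda>s. qmult c (qpowi s m)" d]
        integral_bounded_linear[OF linear_qmult_left int, of c] intG[of qone _ d]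
        integrable_bounded_linear[OF linear_qmult_left int, of c]
      by simp
    have i2: "integrable \<mu> (\<lambda>s. \<Sum>j<k. qmult (qmult (qconj (q i)) (qpowi s (n j - n i))) (q j))" for i
      using intG by simp
    show ?thesis unfolding G_def phi
      by (simp add: Bochner_Integration.integral_sum[OF i2] Bochner_Integration.integral_sum[OF intG] e del: integral_sum')
  qed
  also have "\<dots> = integral\<^sup>L \<mu> (\<lambda>s. ((norm (X s))^2, 0, 0, 0))"
  proof (rule integral_cong_AE)
    show "G \<in> borel_measurable \<mu>" unfolding G_def measurable_cong_sets[OF S refl] by measurable
    show "(\<lambda>s. ((norm (X s))\<^sup>2, 0::real, 0::real, 0::real)) \<in> borel_measurable \<mu>"
      unfolding X_def measurable_cong_sets[OF S refl] by measurable
    show "AE s in \<mu>. G s = ((norm (X s))\<^sup>2, 0, 0, 0)"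
      using ae_qsphere[OF S N]
    proof eventually_elim
      case (elim s)
      have "G s = (\<Sum>i<k. \<Sum>j<k. qmult (qconj (qmult (qpowi s (n i)) (q i))) (qmult (qpowi s (n j)) (q j)))"
        unfolding G_def by (simp add: qpowi_diff[OF elim] qconj_mult qmult_assoc)
      also have "\<dots> = qmult (qconj (X s)) (X s)"
        unfolding X_def by (simp only: qconj_sum qmult_sum_left) (simp only: qmult_sum_right)
      finally show ?case by (simp add: qconj_mult_self)
    qed
  qed
  also have "\<dots> = (integral\<^sup>L \<mu> (\<lambda>s. (norm (X s))^2), 0, 0, 0)"
  proof -
    have Xb: "AE s in \<mu>. norm (X s) \<le> (\<Sum>j<k. norm (q j))"
      using ae_qsphere[OF S N]
    proof eventually_elim
      case (elim s)
      have "norm (X s) \<le> (\<Sum>j<k. norm (qmult (qpowi s (n j)) (q j)))"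
        unfolding X_def by (rule norm_sum)
      also have "\<dots> = (\<Sum>j<k. norm (q j))" by (simp add: qnorm_mult qnorm_qpowi[OF elim])
      finally show ?case .
    qed
    have "integrable \<mu> (\<lambda>s. ((norm (X s))^2, 0::real, 0::real, 0::real))"
    proof (rule integrable_const_bound[where B="(\<Sum>j<k. norm (q j))^2"])
      show "AE s in \<mu>. norm ((norm (X s))\<^sup>2, 0::real, 0::real, 0::real) \<le> (\<Sum>j<k. norm (q j))\<^sup>2"
        using Xb by eventually_elim (simp add: qnorm_real power_mono)
      show "(\<lambda>s. ((norm (X s))\<^sup>2, 0::real, 0::real, 0::real)) \<in> borel_measurable \<mu>"
        unfolding X_def measurable_cong_sets[OF S refl] by measurable
    qed
    then show ?thesis by (subst quat_integral) auto
  qed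
  finally show "is_nonneg_real (\<Sum>i<k. \<Sum>j<k. qmult (qmult (qconj (q i)) (\<phi> (n j - n i))) (q j))"
    unfolding is_nonneg_real_def by auto
qed


lemma pdD:
  fixes k :: nat and n :: "nat \<Rightarrow> int" and q :: "nat \<Rightarrow> quat"
  assumes "positive_definite \<phi>"
  shows "\<exists>r\<ge>0. (\<Sum>i<k. \<Sum>j<k. qmult (qmult (qconj (q i)) (\<phi> (n j - n i))) (q j)) = (r,0,0,0)"
  using assms unfolding positive_definite_def is_nonneg_real_def by blast

lemma pd_zero:
  assumes "positive_definite \<phi>"
  shows "\<exists>r\<ge>0. \<phi> 0 = (r,0,0,0)"
  using pdD[OF assms, where k=1 and q="\<lambda>_. qone" and n="\<lambda>_. 0"] by simp

lemma pd_two: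
  assumes "positive_definite \<phi>"
  shows "\<exists>r\<ge>0. \<phi> 0 + qmult (\<phi> m) y + qmult (qconj y) (\<phi> (-m)) + qmult (qmult (qconj y) (\<phi> 0)) y = (r,0,0,0)"
proof -
  define Q :: "nat \<Rightarrow> quat" where "Q i = (if i = 0 then qone else y)" for i
  define M :: "nat \<Rightarrow> int" where "M i = (if i = 0 then 0 else m)" for i
  obtain r where r: "r \<ge> 0" "(\<Sum>i<2. \<Sum>j<2. qmult (qmult (qconj (Q i)) (\<phi> (M j - M i))) (Q j)) = (r,0,0,0)"
    using pdD[OF assms, where k=2 and q=Q and n=M] by blast
  have "(\<Sum>i<2. \<Sum>j<2. qmult (qmult (qconj (Q i)) (\<phi> (M j - M i))) (Q j))
     = \<phi> 0 + qmult (\<phi> m) y + qmult (qconj y) (\<phi> (-m)) + qmult (qmult (qconj y) (\<phi> 0)) y"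
    by (simp add: numeral_2_eq_2 Q_def M_def add.assoc)
  then show ?thesis using r by auto
qed

lemma pd_sym:
  assumes "positive_definite \<phi>"
  shows "\<phi> (-m) = qconj (\<phi> m)"
proof -
  obtain r0 where r0: "\<phi> 0 = (r0,0,0,0)" using pd_zero[OF assms] by blast
  obtain x0 x1 x2 x3 where x: "\<phi> m = (x0,x1,x2,x3)" by (cases "\<phi> m" rule: prod_cases4)
  obtain z0 z1 z2 z3 where z: "\<phi> (-m) = (z0,z1,z2,z3)" by (cases "\<phi> (-m)" rule: prod_cases4)
  obtain a where a: "\<phi> 0 + qmult (\<phi> m) qone + qmult (qconj qone) (\<phi> (-m)) + qmult (qmult (qconj qone) (\<phi> 0)) qone = (a,0,0,0)"
    using pd_two[OF assms] by blast
  obtain b where b: "\<phi> 0 + qmult (\<phi> m) (0,1,0,0) + qmult (qconj (0,1,0,0)) (\<phi> (-m)) + qmult (qmult (qconj (0,1,0,0)) (\<phi> 0)) (0,1,0,0) = (b,0,0,0)"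
    using pd_two[OF assms] by blast
  obtain c where c: "\<phi> 0 + qmult (\<phi> m) (0,0,1,0) + qmult (qconj (0,0,1,0)) (\<phi> (-m)) + qmult (qmult (qconj (0,0,1,0)) (\<phi> 0)) (0,0,1,0) = (c,0,0,0)"
    using pd_two[OF assms] by blast
  show ?thesis using a b c unfolding x z r0 by (simp add: qone_def)
qed

lemma pd_bound_zero:
  assumes "positive_definite \<phi>" "\<phi> 0 = 0"
  shows "\<phi> m = 0"
proof -
  obtain x0 x1 x2 x3 where x: "\<phi> m = (x0,x1,x2,x3)" by (cases "\<phi> m" rule: prod_cases4)
  obtain r where r: "r \<ge> 0" "\<phi> 0 + qmult (\<phi> m) (- qconj (\<phi> m)) + qmult (qconj (- qconj (\<phi> m))) (\<phi> (-m)) + qmult (qmult (qconj (- qconj (\<phi> m))) (\<phi> 0)) (- qconj (\<phi> m)) = (r,0,0,0)"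
    using pd_two[OF assms(1)] by blast
  have "- 2 * (x0^2+x1^2+x2^2+x3^2) = r" using r(2) unfolding pd_sym[OF assms(1)] assms(2) x
    by (simp add: power2_eq_square)
  then have "x0^2+x1^2+x2^2+x3^2 = 0" using r(1)
    by (smt (verit) sum_power2_ge_zero zero_le_power2)
  then show ?thesis using x by (simp add: add_nonneg_eq_0_iff zero_prod_def)
qed

definition qa :: "(int \<Rightarrow> quat) \<Rightarrow> int \<Rightarrow> real" where "qa \<phi> m = fst (\<phi> m)"
definition qv1 :: "(int \<Rightarrow> quat) \<Rightarrow> int \<Rightarrow> real" where "qv1 \<phi> m = fst (snd (\<phi> m))"
definition qv2 :: "(int \<Rightarrow> quat) \<Rightarrow> int \<Rightarrow> real" where "qv2 \<phi> m = fst (snd (snd (\<phi> m)))"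
definition qv3 :: "(int \<Rightarrow> quat) \<Rightarrow> int \<Rightarrow> real" where "qv3 \<phi> m = snd (snd (snd (\<phi> m)))"

lemma phi_split: "\<phi> m = (qa \<phi> m, qv1 \<phi> m, qv2 \<phi> m, qv3 \<phi> m)"
  by (simp add: qa_def qv1_def qv2_def qv3_def)

definition TP :: "nat \<Rightarrow> (int \<Rightarrow> real) \<Rightarrow> (int \<Rightarrow> real) \<Rightarrow> real \<Rightarrow> real" where
  "TP N g h t = (\<Sum>i<N. \<Sum>j<N. g (int j - int i) * cos (of_int (int j - int i) * t)
                                + h (int j - int i) * sin (of_int (int j - int i) * t))"

lemma TP_scale: "TP N (\<lambda>m. c * g m) (\<lambda>m. c * h m) t = c * TP N g h t"
  unfolding TP_def by (simp add: sum_distrib_left algebra_simps)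

lemma TP_add: "TP N (\<lambda>m. g m + g' m) (\<lambda>m. h m + h' m) t = TP N g h t + TP N g' h' t"
  unfolding TP_def by (simp add: sum.distrib algebra_simps)

lemma re_term:
  assumes "u1^2+u2^2+u3^2 = (1::real)"
  shows "fst (qmult (qmult (qconj (cos a, u1 * sin a, u2 * sin a, u3 * sin a)) (x0,x1,x2,x3)) (cos b, u1 * sin b, u2 * sin b, u3 * sin b))
    = x0 * cos (b - a) - (x1*u1+x2*u2+x3*u3) * sin (b - a)"
proof -
  have "fst (qmult (qmult (qconj (cos a, u1 * sin a, u2 * sin a, u3 * sin a)) (x0,x1,x2,x3)) (cos b, u1 * sin b, u2 * sin b, u3 * sin b))
     = x0 * (cos b * cos a + (u1^2+u2^2+u3^2) * sin b * sin a) - (x1*u1+x2*u2+x3*u3) * (sin b * cos a - cos b * sin a)"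
    by (simp add: algebra_simps power2_eq_square)
  also have "\<dots> = x0 * (cos b * cos a + sin b * sin a) - (x1*u1+x2*u2+x3*u3) * (sin b * cos a - cos b * sin a)"
    using assms by simp
  finally show ?thesis by (simp add: cos_diff sin_diff)
qed

lemma fejer_unit:
  assumes pd: "positive_definite \<phi>" and u: "u1^2+u2^2+u3^2 = (1::real)"
  shows "0 \<le> TP N (qa \<phi>) (\<lambda>m. - (u1 * qv1 \<phi> m + u2 * qv2 \<phi> m + u3 * qv3 \<phi> m)) t"
proof -
  define Q :: "nat \<Rightarrow> quat" where "Q j = (cos (real j * t), u1 * sin (real j * t), u2 * sin (real j * t), u3 * sin (real j * t))" for j
  obtain r where r: "r \<ge> 0" "(\<Sum>i<N. \<Sum>j<N. qmult (qmult (qconj (Q i)) (\<phi> (int j - int i))) (Q j)) = (r,0,0,0)"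
    using pdD[OF pd, where k=N and q=Q and n=int] by blast
  have "TP N (qa \<phi>) (\<lambda>m. - (u1 * qv1 \<phi> m + u2 * qv2 \<phi> m + u3 * qv3 \<phi> m)) t
      = fst (\<Sum>i<N. \<Sum>j<N. qmult (qmult (qconj (Q i)) (\<phi> (int j - int i))) (Q j))"
    unfolding TP_def fst_sum
  proof (intro sum.cong refl)
    fix i j
    have e: "real j * t - real i * t = of_int (int j - int i) * t" by (simp add: algebra_simps)
    show "qa \<phi> (int j - int i) * cos (of_int (int j - int i) * t) +
         - (u1 * qv1 \<phi> (int j - int i) + u2 * qv2 \<phi> (int j - int i) + u3 * qv3 \<phi> (int j - int i)) *
         sin (of_int (int j - int i) * t) =
         fst (qmult (qmult (qconj (Q i)) (\<phi> (int j - int i))) (Q j))"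
      unfolding Q_def phi_split[of \<phi> "int j - int i"] re_term[OF u] e by (simp add: algebra_simps)
  qed
  then show ?thesis using r by simp
qed

lemma fejer_vec:
  assumes pd: "positive_definite \<phi>"
  shows "0 \<le> TP N (\<lambda>m. sqrt (w1^2+w2^2+w3^2) * qa \<phi> m) (\<lambda>m. w1 * qv1 \<phi> m + w2 * qv2 \<phi> m + w3 * qv3 \<phi> m) t"
proof (cases "w1^2+w2^2+w3^2 = 0")
  case True
  then have "w1 = 0" "w2 = 0" "w3 = 0" by (auto simp: add_nonneg_eq_0_iff)
  then show ?thesis by (simp add: TP_def)
next
  case False
  define r where "r = sqrt (w1^2+w2^2+w3^2)"
  have "0 \<le> w1^2+w2^2+w3^2" by simp
  with False have "0 < w1^2+w2^2+w3^2" by linarith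
  then have rpos: "r > 0" by (simp add: r_def)
  have u: "(-w1/r)^2+(-w2/r)^2+(-w3/r)^2 = 1"
    using rpos False by (simp add: r_def power_divide add_divide_distrib[symmetric])
  have "0 \<le> r * TP N (qa \<phi>) (\<lambda>m. - ((-w1/r) * qv1 \<phi> m + (-w2/r) * qv2 \<phi> m + (-w3/r) * qv3 \<phi> m)) t"
    using fejer_unit[OF pd u] rpos by simp
  also have "\<dots> = TP N (\<lambda>m. r * qa \<phi> m) (\<lambda>m. r * (- ((-w1/r) * qv1 \<phi> m + (-w2/r) * qv2 \<phi> m + (-w3/r) * qv3 \<phi> m))) t"
    by (rule TP_scale[symmetric])
  also have "(\<lambda>m. r * (- ((-w1/r) * qv1 \<phi> m + (-w2/r) * qv2 \<phi> m + (-w3/r) * qv3 \<phi> m))) = (\<lambda>m. w1 * qv1 \<phi> m + w2 * qv2 \<phi> m + w3 * qv3 \<phi> m)"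
    using rpos by (auto simp: field_simps)
  finally show ?thesis by (simp add: r_def)
qed


lemma sin_int_pi: "sin (of_int k * pi) = 0"
  by (simp add: sin_times_pi_eq_0)

lemma hi_cos: "((\<lambda>t. cos (of_int k * t)) has_integral (if k = 0 then 2*pi else 0)) {-pi..pi}"
proof (cases "k = 0")
  case True
  then show ?thesis using has_integral_const_real[of "1::real" "-pi" pi] by simp
next
  case False
  have "((\<lambda>t. cos (of_int k * t)) has_integral ((\<lambda>t. sin (of_int k * t) / of_int k) pi - (\<lambda>t. sin (of_int k * t) / of_int k) (-pi))) {-pi..pi}"
  proof (rule fundamental_theorem_of_calculus)
    show "- pi \<le> pi" by simp
    fix x assume "x \<in> {-pi..pi}"
    have "((\<lambda>t. sin (of_int k * t) / of_int k) has_real_derivative cos (of_int k * x)) (at x within {-pi..pi})"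
      using False by (auto intro!: derivative_eq_intros)
    then show "((\<lambda>t. sin (of_int k * t) / of_int k) has_vector_derivative cos (of_int k * x)) (at x within {-pi..pi})"
      by (simp add: has_real_derivative_iff_has_vector_derivative)
  qed
  then show ?thesis using False by (simp add: sin_int_pi)
qed

lemma hi_sin: "((\<lambda>t. sin (of_int k * t)) has_integral 0) {-pi..pi}"
proof (cases "k = 0")
  case True
  then show ?thesis by simp
next
  case False
  have "((\<lambda>t. sin (of_int k * t)) has_integral ((\<lambda>t. - cos (of_int k * t) / of_int k) pi - (\<lambda>t. - cos (of_int k * t) / of_int k) (-pi))) {-pi..pi}"
  proof (rule fundamental_theorem_of_calculus)
    show "- pi \<le> pi" by simp
    fix x assume "x \<in> {-pi..pi}"
    have "((\<lambda>t. - cos (of_int k * t) / of_int k) has_real_derivative sin (of_int k * x)) (at x within {-pi..pi})"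
      using False by (auto intro!: derivative_eq_intros)
    then show "((\<lambda>t. - cos (of_int k * t) / of_int k) has_vector_derivative sin (of_int k * x)) (at x within {-pi..pi})"
      by (simp add: has_real_derivative_iff_has_vector_derivative)
  qed
  then show ?thesis by simp
qed

lemma hi_cc: "((\<lambda>t. cos (of_int m * t) * cos (of_int n * t)) has_integral
   pi * ((if m = n then 1 else 0) + (if m = -n then 1 else 0))) {-pi..pi}"
proof -
  have e: "cos (of_int m * t) * cos (of_int n * t) = (1/2) * cos (of_int (m - n) * t) + (1/2) * cos (of_int (m + n) * t)" for t :: real
    by (subst cos_times_cos) (simp add: algebra_simps add_divide_distrib diff_divide_distrib)
  have "((\<lambda>t. (1/2) * cos (of_int (m - n) * t) + (1/2) * cos (of_int (m + n) * t)) has_integral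
     (1/2) * (if m - n = 0 then 2*pi else 0) + (1/2) * (if m + n = 0 then 2*pi else 0)) {-pi..pi}"
    by (intro has_integral_add has_integral_mult_right hi_cos)
  then show ?thesis unfolding e by (auto simp: algebra_simps)
qed

lemma hi_ss: "((\<lambda>t. sin (of_int m * t) * cos (of_int n * t)) has_integral 0) {-pi..pi}"
proof -
  have e: "sin (of_int m * t) * cos (of_int n * t) = (1/2) * sin (of_int (m + n) * t) + (1/2) * sin (of_int (m - n) * t)" for t :: real
    by (subst sin_times_cos) (simp add: algebra_simps add_divide_distrib diff_divide_distrib)
  have "((\<lambda>t. (1/2) * sin (of_int (m + n) * t) + (1/2) * sin (of_int (m - n) * t)) has_integral
     (1/2) * 0 + (1/2) * 0) {-pi..pi}"
    by (intro has_integral_add has_integral_mult_right hi_sin)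
  then show ?thesis unfolding e by simp
qed

lemma hi_cs: "((\<lambda>t. cos (of_int m * t) * sin (of_int n * t)) has_integral 0) {-pi..pi}"
  using hi_ss[of n m] by (simp add: mult.commute)

lemma hi_sn: "((\<lambda>t. sin (of_int m * t) * sin (of_int n * t)) has_integral
   pi * ((if m = n then 1 else 0) - (if m = -n then 1 else 0))) {-pi..pi}"
proof -
  have e: "sin (of_int m * t) * sin (of_int n * t) = (1/2) * cos (of_int (m - n) * t) - (1/2) * cos (of_int (m + n) * t)" for t :: real
    by (subst sin_times_sin) (simp add: algebra_simps add_divide_distrib diff_divide_distrib)
  have "((\<lambda>t. (1/2) * cos (of_int (m - n) * t) - (1/2) * cos (of_int (m + n) * t)) has_integral
     (1/2) * (if m - n = 0 then 2*pi else 0) - (1/2) * (if m + n = 0 then 2*pi else 0)) {-pi..pi}"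
    by (intro has_integral_diff has_integral_mult_right hi_cos)
  then show ?thesis unfolding e by (auto simp: algebra_simps)
qed

definition ind :: "bool \<Rightarrow> real" where "ind b = (if b then 1 else 0)"

lemma TP_cos: "((\<lambda>t. TP N g h t * cos (of_int n * t)) has_integral
   pi * (\<Sum>i<N. \<Sum>j<N. g (int j - int i) * (ind (int j - int i = n) + ind (int j - int i = -n)))) {-pi..pi}"
proof -
  have e: "TP N g h t * cos (of_int n * t) = (\<Sum>i<N. \<Sum>j<N. g (int j - int i) * (cos (of_int (int j - int i) * t) * cos (of_int n * t))
     + h (int j - int i) * (sin (of_int (int j - int i) * t) * cos (of_int n * t)))" for t
    unfolding TP_def sum_distrib_right by (simp add: algebra_simps)
  have "((\<lambda>t. (\<Sum>i<N. \<Sum>j<N. g (int j - int i) * (cos (of_int (int j - int i) * t) * cos (of_int n * t))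
     + h (int j - int i) * (sin (of_int (int j - int i) * t) * cos (of_int n * t)))) has_integral
     (\<Sum>i<N. \<Sum>j<N. g (int j - int i) * (pi * (ind (int j - int i = n) + ind (int j - int i = -n))) + h (int j - int i) * 0)) {-pi..pi}"
    unfolding ind_def
    by (intro has_integral_sum finite_lessThan has_integral_add has_integral_mult_right hi_cc hi_ss)
  then show ?thesis unfolding e by (simp add: sum_distrib_left algebra_simps)
qed

lemma TP_sin: "((\<lambda>t. TP N g h t * sin (of_int n * t)) has_integral
   pi * (\<Sum>i<N. \<Sum>j<N. h (int j - int i) * (ind (int j - int i = n) - ind (int j - int i = -n)))) {-pi..pi}"
proof -
  have e: "TP N g h t * sin (of_int n * t) = (\<Sum>i<N. \<Sum>j<N. g (int j - int i) * (cos (of_int (int j - int i) * t) * sin (of_int n * t))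
     + h (int j - int i) * (sin (of_int (int j - int i) * t) * sin (of_int n * t)))" for t
    unfolding TP_def sum_distrib_right by (simp add: algebra_simps)
  have "((\<lambda>t. (\<Sum>i<N. \<Sum>j<N. g (int j - int i) * (cos (of_int (int j - int i) * t) * sin (of_int n * t))
     + h (int j - int i) * (sin (of_int (int j - int i) * t) * sin (of_int n * t)))) has_integral
     (\<Sum>i<N. \<Sum>j<N. g (int j - int i) * 0 + h (int j - int i) * (pi * (ind (int j - int i = n) - ind (int j - int i = -n))))) {-pi..pi}"
    unfolding ind_def
    by (intro has_integral_sum finite_lessThan has_integral_add has_integral_mult_right hi_cs hi_sn)
  then show ?thesis unfolding e by (simp add: sum_distrib_left algebra_simps)
qed

definition cnt :: "nat \<Rightarrow> int \<Rightarrow> real" where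
  "cnt N n = (\<Sum>i<N. \<Sum>j<N. ind (int j - int i = n))"

lemma sum_ind: "(\<Sum>i<N. \<Sum>j<N. f (int j - int i) * ind (int j - int i = n)) = cnt N n * f n"
  unfolding cnt_def sum_distrib_right by (intro sum.cong refl) (auto simp: ind_def)

lemma cnt_neg: "cnt N (-n) = cnt N n"
  unfolding cnt_def by (subst sum.swap) (intro sum.cong refl, auto simp: ind_def)

lemma cnt_le: "cnt N n \<le> real N"
proof -
  have "(\<Sum>j<N. ind (int j - int i = n)) \<le> 1" for i
  proof (cases "\<exists>j<N. int j - int i = n")
    case True
    then obtain j0 where j0: "j0 < N" "int j0 - int i = n" by blast
    have "(\<Sum>j<N. ind (int j - int i = n)) = (\<Sum>j<N. if j = j0 then 1 else 0)"
      by (intro sum.cong refl) (use j0 in \<open>auto simp: ind_def\<close>)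
    also have "\<dots> = 1" using j0 by simp
    finally show ?thesis by simp
  next
    case False
    then show ?thesis by (simp add: ind_def)
  qed
  then have "cnt N n \<le> (\<Sum>i<N. 1)" unfolding cnt_def by (intro sum_mono) auto
  then show ?thesis by simp
qed

lemma cnt_ge_pos: assumes "n \<ge> 0" shows "cnt N n \<ge> real N - of_int n"
proof (cases "nat n \<le> N")
  case True
  have "cnt N n \<ge> (\<Sum>i<N - nat n. \<Sum>j<N. ind (int j - int i = n))"
    unfolding cnt_def by (rule sum_mono2) (auto simp: ind_def intro!: sum_nonneg)
  also have "(\<Sum>i<N - nat n. \<Sum>j<N. ind (int j - int i = n)) = (\<Sum>i<N - nat n. 1)"
  proof (intro sum.cong refl)
    fix i assume i: "i \<in> {..<N - nat n}"
    have "(\<Sum>j<N. ind (int j - int i = n)) = (\<Sum>j<N. if j = i + nat n then 1 else 0)"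
      by (intro sum.cong refl) (use assms in \<open>auto simp: ind_def\<close>)
    also have "\<dots> = 1" using i by simp
    finally show "(\<Sum>j<N. ind (int j - int i = n)) = 1" .
  qed
  finally show ?thesis using True assms by (simp add: of_nat_diff)
next
  case False
  have "0 \<le> cnt N n" unfolding cnt_def by (intro sum_nonneg) (auto simp: ind_def)
  then show ?thesis using False assms by linarith
qed

lemma cnt_ge: "cnt N n \<ge> real N - \<bar>of_int n\<bar>"
proof (cases "n \<ge> 0")
  case True then show ?thesis using cnt_ge_pos[OF True] by simp
next
  case False then show ?thesis using cnt_ge_pos[of "-n" N] cnt_neg[of N n] by simp
qed

lemma cnt_lim: "(\<lambda>N. cnt N n / real N) \<longlonglongrightarrow> 1"
proof (rule real_tendsto_sandwich[where f="\<lambda>N. 1 - \<bar>of_int n\<bar> / real N" and h="\<lambda>N. 1"])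
  show "\<forall>\<^sub>F N in sequentially. 1 - \<bar>of_int n\<bar> / real N \<le> cnt N n / real N"
    using eventually_gt_at_top[of 0]
  proof eventually_elim
    case (elim N)
    have "(real N - \<bar>of_int n\<bar>) / real N \<le> cnt N n / real N"
      using cnt_ge[of N n] elim by (intro divide_right_mono) auto
    then show ?case using elim by (simp add: diff_divide_distrib)
  qed
  show "\<forall>\<^sub>F N in sequentially. cnt N n / real N \<le> 1"
    using eventually_gt_at_top[of 0]
  proof eventually_elim
    case (elim N)
    then show ?case using cnt_le[of N n] by (simp add: field_simps)
  qed
  show "(\<lambda>N. 1 - \<bar>of_int n\<bar> / real N) \<longlonglongrightarrow> 1"
    using tendsto_diff[OF tendsto_const[of 1] lim_const_over_n[of "\<bar>of_int n\<bar>"]] by simp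
qed simp

lemma cnt_zero: "cnt N 0 = real N"
  using cnt_le[of N 0] cnt_ge[of N 0] by simp


definition wconv :: "(nat \<Rightarrow> real measure) \<Rightarrow> real measure \<Rightarrow> bool" where
  "wconv \<mu> M \<longleftrightarrow> (\<forall>(f::real \<Rightarrow> real) B. (\<forall>x. isCont f x) \<longrightarrow> (\<forall>x. \<bar>f x\<bar> \<le> B) \<longrightarrow>
      (\<lambda>n. integral\<^sup>L (\<mu> n) f) \<longlonglongrightarrow> integral\<^sup>L M f)"

lemma wconv_subseq: assumes "wconv \<mu> M" "strict_mono r" shows "wconv (\<mu> \<circ> r) M"
  unfolding wconv_def
proof (intro allI impI)
  fix f :: "real \<Rightarrow> real" and B assume "\<forall>x. isCont f x" "\<forall>x. \<bar>f x\<bar> \<le> B"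
  then have "(\<lambda>n. integral\<^sup>L (\<mu> n) f) \<longlonglongrightarrow> integral\<^sup>L M f" using assms(1) unfolding wconv_def by blast
  from LIMSEQ_subseq_LIMSEQ[OF this assms(2)]
  show "(\<lambda>n. integral\<^sup>L ((\<mu> \<circ> r) n) f) \<longlonglongrightarrow> integral\<^sup>L M f" by (simp add: comp_def)
qed

lemma weak_to_wconv:
  assumes "\<And>n. real_distribution (\<mu> n)" "real_distribution M" "weak_conv_m \<mu> M"
  shows "wconv \<mu> M"
  unfolding wconv_def
proof (intro allI impI)
  fix f :: "real \<Rightarrow> real" and B assume "\<forall>x. isCont f x" "\<forall>x. \<bar>f x\<bar> \<le> B"
  then show "(\<lambda>n. integral\<^sup>L (\<mu> n) f) \<longlonglongrightarrow> integral\<^sup>L M f"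
    using weak_conv_imp_integral_bdd_continuous_conv[OF assms, of f B] by simp
qed

lemma tight_comp: assumes "tight \<mu>" shows "tight (\<mu> \<circ> r)"
  unfolding tight_def
proof (intro conjI allI impI)
  fix n show "real_distribution ((\<mu> \<circ> r) n)" using assms by (simp add: tight_def)
  fix e :: real assume "0 < e"
  then obtain a b where "a < b" "\<forall>n. measure (\<mu> n) {a<..b} > 1 - e" using assms unfolding tight_def by blast
  then show "\<exists>a b. a < b \<and> (\<forall>n. 1 - e < measure ((\<mu> \<circ> r) n) {a<..b})" by auto
qed

lemma helly_multi:
  fixes \<mu> :: "nat \<Rightarrow> nat \<Rightarrow> real measure"
  assumes "\<And>c. c < m \<Longrightarrow> tight (\<mu> c)"
  shows "\<exists>r \<Lambda>. strict_mono r \<and> (\<forall>c<m. real_distribution (\<Lambda> c) \<and> wconv (\<mu> c \<circ> r) (\<Lambda> c))"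
  using assms
proof (induction m)
  case 0
  show ?case by (rule exI[of _ id]) (auto simp: strict_mono_def)
next
  case (Suc m)
  from Suc.IH[OF Suc.prems[OF less_SucI]]
  obtain r \<Lambda> where r: "strict_mono r" "\<forall>c<m. real_distribution (\<Lambda> c) \<and> wconv (\<mu> c \<circ> r) (\<Lambda> c)"
    by blast
  have t: "tight (\<mu> m)" using Suc.prems by simp
  obtain r' M where r': "strict_mono r'" "real_distribution M" "weak_conv_m (\<mu> m \<circ> r \<circ> r') M"
    using tight_imp_convergent_subsubsequence[OF t r(1)] by blast
  have rd: "real_distribution ((\<mu> m \<circ> r \<circ> r') n)" for n using t unfolding tight_def by simp
  have w: "wconv (\<mu> m \<circ> (r \<circ> r')) M"
    using weak_to_wconv[OF rd r'(2,3)] by (simp add: comp_assoc)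
  show ?case
  proof (intro exI[of _ "r \<circ> r'"] exI[of _ "\<Lambda>(m := M)"] conjI allI impI)
    show "strict_mono (r \<circ> r')" using r(1) r'(1) by (rule strict_mono_o)
    fix c assume "c < Suc m"
    then show "real_distribution ((\<Lambda>(m := M)) c)" using r(2) r'(2) by (cases "c = m") auto
    show "wconv (\<mu> c \<circ> (r \<circ> r')) ((\<Lambda>(m := M)) c)"
    proof (cases "c = m")
      case True then show ?thesis using w by simp
    next
      case False
      then have "wconv (\<mu> c \<circ> r \<circ> r') (\<Lambda> c)" using r(2) \<open>c < Suc m\<close> wconv_subseq[OF _ r'(1)] by simp
      then show ?thesis using False by (simp add: comp_assoc)
    qed
  qed
qed

definition dens :: "nat \<Rightarrow> (int \<Rightarrow> real) \<Rightarrow> (int \<Rightarrow> real) \<Rightarrow> real \<Rightarrow> real" where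
  "dens N g h t = indicator {-pi..pi} t * TP N g h t / (2 * pi * real N * g 0)"

definition Pm :: "nat \<Rightarrow> (int \<Rightarrow> real) \<Rightarrow> (int \<Rightarrow> real) \<Rightarrow> real measure" where
  "Pm N g h = density lborel (\<lambda>t. ennreal (dens N g h t))"

lemma continuous_TP: "continuous_on A (TP N g h)"
  unfolding TP_def by (intro continuous_intros)

lemma measurable_TP[measurable]: "TP N g h \<in> borel_measurable borel"
  by (intro borel_measurable_continuous_onI continuous_TP)

lemma measurable_dens[measurable]: "dens N g h \<in> borel_measurable borel"
  unfolding dens_def by measurable

lemma sets_Pm[simp]: "sets (Pm N g h) = sets borel"
  by (simp add: Pm_def)

lemma integral_Pm:
  assumes pos: "\<And>t. 0 \<le> TP N g h t" and g0: "g 0 > 0" and N: "N > 0"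
    and f: "continuous_on UNIV f"
  shows "integral\<^sup>L (Pm N g h) f = integral {-pi..pi} (\<lambda>t. TP N g h t * f t) / (2 * pi * real N * g 0)"
proof -
  have fm[measurable]: "f \<in> borel_measurable borel" using f by (rule borel_measurable_continuous_onI)
  have dnn: "0 \<le> dens N g h t" for t using pos g0 N by (simp add: dens_def indicator_def)
  have "integral\<^sup>L (Pm N g h) f = integral\<^sup>L lborel (\<lambda>t. dens N g h t * f t)"
    unfolding Pm_def by (subst integral_density) (auto simp: dnn)
  also have "\<dots> = (LINT t:{-pi..pi}|lborel. TP N g h t * f t) / (2 * pi * real N * g 0)"
    by (simp add: dens_def set_lebesgue_integral_def indicator_def algebra_simps)
  also have "(LINT t:{-pi..pi}|lborel. TP N g h t * f t) = integral {-pi..pi} (\<lambda>t. TP N g h t * f t)"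
    by (intro set_borel_integral_eq_integral borel_integrable_atLeastAtMost' continuous_intros continuous_TP
        continuous_on_subset[OF f]) auto
  finally show ?thesis .
qed

lemma cont_cos: "continuous_on UNIV (\<lambda>t::real. cos (of_int n * t))"
  by (intro continuous_intros)
lemma cont_sin: "continuous_on UNIV (\<lambda>t::real. sin (of_int n * t))"
  by (intro continuous_intros)

lemma Pm_cos:
  assumes pos: "\<And>t. 0 \<le> TP N g h t" and g0: "g 0 > 0" and N: "N > 0" and ev: "\<And>m. g (-m) = g m"
  shows "integral\<^sup>L (Pm N g h) (\<lambda>t. cos (of_int n * t)) = cnt N n * g n / (real N * g 0)"
proof -
  have "integral {-pi..pi} (\<lambda>t. TP N g h t * cos (of_int n * t)) =
     pi * (\<Sum>i<N. \<Sum>j<N. g (int j - int i) * (ind (int j - int i = n) + ind (int j - int i = -n)))"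
    by (rule integral_unique[OF TP_cos])
  also have "\<dots> = pi * (cnt N n * g n + cnt N (-n) * g (-n))"
    by (simp add: distrib_left sum.distrib sum_ind)
  also have "\<dots> = 2 * pi * cnt N n * g n" by (simp add: cnt_neg ev)
  finally show ?thesis using N g0 by (simp add: integral_Pm[OF pos g0 N cont_cos])
qed

lemma Pm_sin:
  assumes pos: "\<And>t. 0 \<le> TP N g h t" and g0: "g 0 > 0" and N: "N > 0" and od: "\<And>m. h (-m) = - h m"
  shows "integral\<^sup>L (Pm N g h) (\<lambda>t. sin (of_int n * t)) = cnt N n * h n / (real N * g 0)"
proof -
  have "integral {-pi..pi} (\<lambda>t. TP N g h t * sin (of_int n * t)) =
     pi * (\<Sum>i<N. \<Sum>j<N. h (int j - int i) * (ind (int j - int i = n) - ind (int j - int i = -n)))"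
    by (rule integral_unique[OF TP_sin])
  also have "\<dots> = pi * (cnt N n * h n - cnt N (-n) * h (-n))"
    by (simp add: right_diff_distrib sum_subtractf sum_ind)
  also have "\<dots> = 2 * pi * cnt N n * h n" by (simp add: cnt_neg od)
  finally show ?thesis using N g0 by (simp add: integral_Pm[OF pos g0 N cont_sin])
qed

lemma Pm_prob:
  assumes pos: "\<And>t. 0 \<le> TP N g h t" and g0: "g 0 > 0" and N: "N > 0" and ev: "\<And>m. g (-m) = g m"
  shows "real_distribution (Pm N g h)"
proof -
  have dnn: "0 \<le> dens N g h t" for t using pos g0 N by (simp add: dens_def indicator_def)
  have "integral\<^sup>L lborel (dens N g h) = integral\<^sup>L (Pm N g h) (\<lambda>t. cos (of_int 0 * t))"
    unfolding Pm_def by (subst integral_density) (auto simp: dnn)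
  also have "\<dots> = 1" by (subst Pm_cos[OF pos g0 N ev]) (use N g0 in \<open>simp add: cnt_zero\<close>)
  finally have "integral\<^sup>L lborel (dens N g h) = 1" .
  moreover have "integrable lborel (dens N g h)"
  proof -
    have "set_integrable lborel {-pi..pi} (\<lambda>t. TP N g h t / (2 * pi * real N * g 0))"
      by (intro borel_integrable_atLeastAtMost' continuous_intros continuous_TP) (use N g0 in auto)
    moreover have "dens N g h = (\<lambda>x. indicator {-pi..pi} x *\<^sub>R (TP N g h x / (2 * pi * real N * g 0)))"
      by (auto simp: dens_def fun_eq_iff)
    ultimately show ?thesis by (simp add: set_integrable_def)
  qed
  ultimately have "emeasure (Pm N g h) UNIV = 1"
    unfolding Pm_def using dnn
    by (subst emeasure_density) (auto simp: nn_integral_eq_integral)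
  then have "prob_space (Pm N g h)" by (intro prob_spaceI) (simp add: Pm_def)
  then show ?thesis by (simp add: real_distribution_def real_distribution_axioms_def)
qed

lemma Pm_outside:
  assumes "\<And>t. 0 \<le> TP N g h t" "g 0 > 0" "N > 0"
  shows "emeasure (Pm N g h) (- {-pi..pi}) = 0"
  unfolding Pm_def
  apply (subst emeasure_density)
    apply simp_all
  apply (rule order_antisym)
   apply (rule order_trans[OF nn_integral_mono[where v="\<lambda>_. 0"]])
    apply (auto simp: dens_def indicator_def)
  done

lemma Pm_tight:
  assumes pos: "\<And>N t. 0 \<le> TP (Suc N) g h t" and g0: "g 0 > 0" and ev: "\<And>m. g (-m) = g m"
  shows "tight (\<lambda>N. Pm (Suc N) g h)"
  unfolding tight_def
proof (intro conjI allI impI)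
  fix N show "real_distribution (Pm (Suc N) g h)" by (rule Pm_prob[OF pos g0 _ ev]) simp
  fix e :: real assume e: "0 < e"
  have "1 - e < measure (Pm (Suc N) g h) {-4<..4}" for N
  proof -
    interpret real_distribution "Pm (Suc N) g h" by (rule Pm_prob[OF pos g0 _ ev]) simp
    have "{-pi..pi} \<subseteq> {-4<..4::real}" using pi_less_4 by auto
    then have "measure (Pm (Suc N) g h) {-pi..pi} \<le> measure (Pm (Suc N) g h) {-4<..4}"
      by (intro finite_measure_mono) auto
    moreover have "measure (Pm (Suc N) g h) {-pi..pi} = 1"
    proof -
      have "measure (Pm (Suc N) g h) (- {-pi..pi}) = 0"
        using Pm_outside[OF pos g0] by (simp add: measure_def)
      then show ?thesis using prob_compl[of "- {-pi..pi}"] by simp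
    qed
    ultimately show ?thesis using e by simp
  qed
  then show "\<exists>a b. a < b \<and> (\<forall>N. 1 - e < measure (Pm (Suc N) g h) {a<..b})"
    by (intro exI[of _ "-4"] exI[of _ 4]) auto
qed


definition bcn :: "(real \<Rightarrow> real) \<Rightarrow> bool" where
  "bcn f \<longleftrightarrow> (\<forall>x. isCont f x) \<and> (\<exists>B. \<forall>x. \<bar>f x\<bar> \<le> B) \<and> (\<forall>x. 0 \<le> f x)"

lemma closed_le:
  fixes M1 M2 :: "real measure"
  assumes S1: "sets M1 = sets borel" and S2: "sets M2 = sets borel"
    and F1: "finite_measure M1" and F2: "finite_measure M2" and c: "c \<ge> 0"
    and le: "\<And>f. bcn f \<Longrightarrow> integral\<^sup>L M1 f \<le> c * integral\<^sup>L M2 f"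
    and F: "closed F"
  shows "measure M1 F \<le> c * measure M2 F"
proof (cases "F = {}")
  case True then show ?thesis by simp
next
  case False
  interpret M1: finite_measure M1 by fact
  interpret M2: finite_measure M2 by fact
  define s where "s n x = max 0 (1 - real (Suc n) * infdist x F)" for n x
  have cont: "continuous_on UNIV (s n)" for n unfolding s_def by (intro continuous_intros)
  have bcn: "bcn (s n)" for n
  proof -
    have "isCont (s n) x" for x using cont[of n] by (simp add: continuous_on_eq_continuous_at)
    moreover have "\<bar>s n x\<bar> \<le> 1" for x using infdist_nonneg[of x F] by (simp add: s_def)
    moreover have "0 \<le> s n x" for x by (simp add: s_def)
    ultimately show ?thesis unfolding bcn_def by blast
  qed
  have lim: "(\<lambda>n. s n x) \<longlonglongrightarrow> indicator F x" for x
  proof (cases "x \<in> F")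
    case True
    then have "infdist x F = 0" using in_closed_iff_infdist_zero[OF F False] by simp
    then show ?thesis using True by (simp add: s_def)
  next
    case xF: False
    have d: "infdist x F > 0" by (rule infdist_pos_not_in_closed[OF F False xF])
    obtain N where N: "1 / infdist x F < real N" using reals_Archimedean2 by blast
    have "eventually (\<lambda>n. s n x = 0) sequentially"
      unfolding eventually_sequentially
    proof (intro exI[of _ N] allI impI)
      fix n assume "N \<le> n"
      then have "1 / infdist x F < real (Suc n)" using N by linarith
      then have "1 < real (Suc n) * infdist x F" using d by (simp add: field_simps)
      then show "s n x = 0" by (simp add: s_def)
    qed
    then show ?thesis using xF by (simp add: tendsto_eventually)
  qed
  have meas: "s n \<in> borel_measurable borel" for n by (rule borel_measurable_continuous_onI[OF cont])
  have bnd: "norm (s n x) \<le> 1" for n x by (auto simp: s_def infdist_nonneg)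
  have FB: "F \<in> sets borel" using F by (simp add: borel_closed)
  have l1: "(\<lambda>n. integral\<^sup>L M1 (s n)) \<longlonglongrightarrow> integral\<^sup>L M1 (indicator F :: real \<Rightarrow> real)"
    by (rule integral_dominated_convergence[where w="\<lambda>_. 1"])
       (use meas FB bnd lim in \<open>auto simp: measurable_cong_sets[OF S1 refl]\<close>)
  have l2: "(\<lambda>n. integral\<^sup>L M2 (s n)) \<longlonglongrightarrow> integral\<^sup>L M2 (indicator F :: real \<Rightarrow> real)"
    by (rule integral_dominated_convergence[where w="\<lambda>_. 1"])
       (use meas FB bnd lim in \<open>auto simp: measurable_cong_sets[OF S2 refl]\<close>)
  have "integral\<^sup>L M1 (indicator F :: real \<Rightarrow> real) \<le> c * integral\<^sup>L M2 (indicator F :: real \<Rightarrow> real)"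
    by (rule LIMSEQ_le[OF l1 tendsto_mult_left[OF l2]]) (use le bcn in auto)
  then show ?thesis using FB S1 S2 by simp
qed

lemma pos_le:
  fixes M1 M2 :: "real measure"
  assumes S1: "sets M1 = sets borel" and S2: "sets M2 = sets borel"
    and F1: "finite_measure M1" and F2: "finite_measure M2" and c: "c \<ge> 0"
    and le: "\<And>f. bcn f \<Longrightarrow> integral\<^sup>L M1 f \<le> c * integral\<^sup>L M2 f"
    and B: "B \<in> sets borel"
  shows "emeasure M1 B \<le> ennreal c * emeasure M2 B"
proof -
  interpret M1: finite_measure M1 by fact
  interpret M2: finite_measure M2 by fact
  have "emeasure M1 B = (SUP K \<in> {K. K \<subseteq> B \<and> compact K}. emeasure M1 K)"
    by (rule inner_regular[OF S1 _ B]) simp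
  also have "\<dots> \<le> ennreal c * emeasure M2 B"
  proof (rule SUP_least)
    fix K assume K: "K \<in> {K. K \<subseteq> B \<and> compact K}"
    then have Kc: "closed K" by (simp add: compact_imp_closed)
    have KB: "K \<in> sets borel" using Kc by (simp add: borel_closed)
    have "emeasure M1 K = ennreal (measure M1 K)" by (simp add: M1.emeasure_eq_measure)
    also have "\<dots> \<le> ennreal (c * measure M2 K)"
      using closed_le[OF S1 S2 F1 F2 c le Kc] by (simp add: ennreal_leI)
    also have "\<dots> = ennreal c * emeasure M2 K"
      using c by (simp add: M2.emeasure_eq_measure ennreal_mult)
    also have "\<dots> \<le> ennreal c * emeasure M2 B"
      using K KB B S2 by (intro mult_left_mono emeasure_mono) auto
    finally show "emeasure M1 K \<le> ennreal c * emeasure M2 B" .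
  qed
  finally show ?thesis .
qed

lemma ae_nonneg_from_tests:
  fixes L :: "real measure" and h :: "real \<Rightarrow> real"
  assumes S: "sets L = sets borel" and F: "finite_measure L"
    and hi: "integrable L h"
    and tst: "\<And>f. bcn f \<Longrightarrow> 0 \<le> integral\<^sup>L L (\<lambda>x. f x * h x)"
  shows "AE x in L. 0 \<le> h x"
proof -
  interpret finite_measure L by fact
  have hm[measurable]: "h \<in> borel_measurable borel" using hi measurable_cong_sets[OF S refl] by auto
  define M1 where "M1 = density L (\<lambda>x. ennreal (max 0 (- h x)))"
  define M2 where "M2 = density L (\<lambda>x. ennreal (max 0 (h x)))"
  have S1: "sets M1 = sets borel" and S2: "sets M2 = sets borel" using S by (simp_all add: M1_def M2_def)
  have ip: "integrable L (\<lambda>x. max 0 (h x))" and in_: "integrable L (\<lambda>x. max 0 (- h x))"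
    using hi by (auto intro!: integrable_max)
  have sp: "space L = UNIV" using sets_eq_imp_space_eq[OF S] by simp
  have mL: "f \<in> borel_measurable L \<longleftrightarrow> f \<in> borel_measurable borel" for f :: "real \<Rightarrow> real"
    by (metis measurable_cong_sets[OF S refl])
  have mLe: "f \<in> borel_measurable L \<longleftrightarrow> f \<in> borel_measurable borel" for f :: "real \<Rightarrow> ennreal"
    by (metis measurable_cong_sets[OF S refl])
  have F1: "finite_measure M1" unfolding M1_def
  proof (rule finite_measureI)
    have "emeasure (density L (\<lambda>x. ennreal (max 0 (- h x)))) (space (density L (\<lambda>x. ennreal (max 0 (- h x)))))
      = (\<integral>\<^sup>+x. ennreal (max 0 (- h x)) \<partial>L)"
      by (subst emeasure_density) (auto simp: mL mLe S sp intro!: nn_integral_cong)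
    also have "\<dots> = ennreal (integral\<^sup>L L (\<lambda>x. max 0 (- h x)))"
      by (rule nn_integral_eq_integral[OF in_]) auto
    finally show "emeasure (density L (\<lambda>x. ennreal (max 0 (- h x)))) (space (density L (\<lambda>x. ennreal (max 0 (- h x))))) \<noteq> \<infinity>"
      by simp
  qed
  have F2: "finite_measure M2" unfolding M2_def
  proof (rule finite_measureI)
    have "emeasure (density L (\<lambda>x. ennreal (max 0 (h x)))) (space (density L (\<lambda>x. ennreal (max 0 (h x)))))
      = (\<integral>\<^sup>+x. ennreal (max 0 (h x)) \<partial>L)"
      by (subst emeasure_density) (auto simp: mL mLe S sp intro!: nn_integral_cong)
    also have "\<dots> = ennreal (integral\<^sup>L L (\<lambda>x. max 0 (h x)))"
      by (rule nn_integral_eq_integral[OF ip]) auto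
    finally show "emeasure (density L (\<lambda>x. ennreal (max 0 (h x)))) (space (density L (\<lambda>x. ennreal (max 0 (h x))))) \<noteq> \<infinity>"
      by simp
  qed
  have le: "integral\<^sup>L M1 f \<le> 1 * integral\<^sup>L M2 f" if f: "bcn f" for f
  proof -
    obtain B where B: "\<And>x. \<bar>f x\<bar> \<le> B" and fc: "\<And>x. isCont f x" using f unfolding bcn_def by blast
    have fm[measurable]: "f \<in> borel_measurable borel"
      using fc by (intro borel_measurable_continuous_onI continuous_at_imp_continuous_on) auto
    have intg: "integrable L (\<lambda>x. g x * f x)" if "integrable L g" for g
      by (rule Bochner_Integration.integrable_bound[where f="\<lambda>x. B * g x"])
         (use that B in \<open>auto simp: mL abs_mult mult.commute intro!: AE_I2 mult_right_mono[OF order_trans[OF _ abs_ge_self]]\<close>)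
    have "integral\<^sup>L M1 f = integral\<^sup>L L (\<lambda>x. max 0 (- h x) * f x)"
      unfolding M1_def by (subst integral_density) (auto simp: mL)
    moreover have "integral\<^sup>L M2 f = integral\<^sup>L L (\<lambda>x. max 0 (h x) * f x)"
      unfolding M2_def by (subst integral_density) (auto simp: mL)
    moreover have "integral\<^sup>L L (\<lambda>x. max 0 (h x) * f x) - integral\<^sup>L L (\<lambda>x. max 0 (- h x) * f x)
        = integral\<^sup>L L (\<lambda>x. f x * h x)"
    proof -
      have "integral\<^sup>L L (\<lambda>x. max 0 (h x) * f x) - integral\<^sup>L L (\<lambda>x. max 0 (- h x) * f x)
         = integral\<^sup>L L (\<lambda>x. max 0 (h x) * f x - max 0 (- h x) * f x)"
        by (rule Bochner_Integration.integral_diff[symmetric]) (auto intro!: intg ip in_)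
      also have "\<dots> = integral\<^sup>L L (\<lambda>x. f x * h x)"
        by (rule Bochner_Integration.integral_cong) (auto simp: max_def algebra_simps)
      finally show ?thesis .
    qed
    ultimately show ?thesis using tst[OF f] by simp
  qed
  define B where "B = {x. h x < 0}"
  have BB: "B \<in> sets borel" unfolding B_def by measurable
  have "emeasure M1 B \<le> ennreal 1 * emeasure M2 B"
    by (rule pos_le[OF S1 S2 F1 F2 _ le BB]) auto
  moreover have "emeasure M2 B = 0"
    unfolding M2_def using BB S
    by (subst emeasure_density) (auto simp: mL mLe B_def indicator_def ennreal_neg intro!: nn_integral_zero' AE_I2)
  ultimately have "emeasure M1 B = 0" by simp
  then have "(\<integral>\<^sup>+x. ennreal (max 0 (- h x)) * indicator B x \<partial>L) = 0"
    unfolding M1_def using BB S by (subst (asm) emeasure_density) (auto simp: mL)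
  then have "AE x in L. ennreal (max 0 (- h x)) * indicator B x = 0"
    using BB S by (subst (asm) nn_integral_0_iff_AE) (auto simp: mL)
  then show ?thesis
    by eventually_elim (auto simp: B_def indicator_def max_def split: if_splits)
qed


lemma qpow_circle:
  assumes u: "u1^2+u2^2+u3^2 = (1::real)"
  shows "qpow (cos t, u1 * sin t, u2 * sin t, u3 * sin t) k = (cos (real k * t), u1 * sin (real k * t), u2 * sin (real k * t), u3 * sin (real k * t))"
proof (induction k)
  case 0 then show ?case by (simp add: qone_def)
next
  case (Suc k)
  have e: "real (Suc k) * t = real k * t + t" by (simp add: algebra_simps)
  have "qmult (cos (real k * t), u1 * sin (real k * t), u2 * sin (real k * t), u3 * sin (real k * t)) (cos t, u1 * sin t, u2 * sin t, u3 * sin t)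
    = (cos (real k * t) * cos t - (u1^2+u2^2+u3^2) * (sin (real k * t) * sin t),
       u1 * (cos (real k * t) * sin t + sin (real k * t) * cos t),
       u2 * (cos (real k * t) * sin t + sin (real k * t) * cos t),
       u3 * (cos (real k * t) * sin t + sin (real k * t) * cos t))"
    by (simp add: algebra_simps power2_eq_square)
  also have "\<dots> = (cos (real (Suc k) * t), u1 * sin (real (Suc k) * t), u2 * sin (real (Suc k) * t), u3 * sin (real (Suc k) * t))"
    unfolding e u by (simp add: cos_add sin_add algebra_simps)
  finally show ?case using Suc by simp
qed

lemma norm_circle:
  assumes u: "u1^2+u2^2+u3^2 = (1::real)"
  shows "norm ((cos t, u1 * sin t, u2 * sin t, u3 * sin t)::quat) = 1"
proof -
  have "cos t ^ 2 + (u1 * sin t)^2 + (u2 * sin t)^2 + (u3 * sin t)^2 = cos t ^ 2 + (u1^2+u2^2+u3^2) * sin t ^ 2"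
    by (simp add: algebra_simps power_mult_distrib)
  also have "\<dots> = 1" using u by simp
  finally show ?thesis by (simp add: qnorm add.assoc)
qed

lemma qpowi_circle:
  assumes u: "u1^2+u2^2+u3^2 = (1::real)"
  shows "qpowi (cos t, u1 * sin t, u2 * sin t, u3 * sin t) n = (cos (of_int n * t), u1 * sin (of_int n * t), u2 * sin (of_int n * t), u3 * sin (of_int n * t))"
proof (cases "0 \<le> n")
  case True
  then show ?thesis using qpow_circle[OF u, of t "nat n"] by (simp add: qpowi_def)
next
  case False
  have c: "qinv (cos t, u1 * sin t, u2 * sin t, u3 * sin t) = (cos (-t), u1 * sin (-t), u2 * sin (-t), u3 * sin (-t))"
    using norm_circle[OF u, of t] by (simp add: qinv_unit)
  have "real (nat (-n)) * (-t) = of_int n * t" using False by simp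
  then show ?thesis using False qpow_circle[OF u, of "-t" "nat (-n)"] by (simp add: qpowi_def c)
qed

lemma final_construct:
  fixes L :: "real measure" and W1 W2 W3 :: "real \<Rightarrow> real"
  assumes L: "real_distribution L" and a0: "a0 > 0"
    and Wm[measurable]: "W1 \<in> borel_measurable borel" "W2 \<in> borel_measurable borel" "W3 \<in> borel_measurable borel"
    and Wb: "\<And>x. W1 x ^2 + W2 x ^2 + W3 x ^2 \<le> 1"
  shows "\<exists>\<mu>::quat measure. sets \<mu> = sets borel \<and> finite_measure \<mu> \<and> emeasure \<mu> (- qsphere) = 0 \<and>
     (\<forall>n. integral\<^sup>L \<mu> (\<lambda>s. qpowi s n) = (a0 * integral\<^sup>L L (\<lambda>t. cos (of_int n * t)),
         a0 * integral\<^sup>L L (\<lambda>t. W1 t * sin (of_int n * t)), a0 * integral\<^sup>L L (\<lambda>t. W2 t * sin (of_int n * t)),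
         a0 * integral\<^sup>L L (\<lambda>t. W3 t * sin (of_int n * t))))"
proof -
  interpret L: real_distribution L by fact
  have SL: "sets L = sets borel" by simp
  define nW where "nW x = sqrt (W1 x ^2 + W2 x ^2 + W3 x ^2)" for x
  define U1 where "U1 x = (if nW x = 0 then 1 else W1 x / nW x)" for x
  define U2 where "U2 x = (if nW x = 0 then 0 else W2 x / nW x)" for x
  define U3 where "U3 x = (if nW x = 0 then 0 else W3 x / nW x)" for x
  have nW_le: "0 \<le> nW x" "nW x \<le> 1" for x using Wb[of x] by (auto simp: nW_def)
  have Uunit: "U1 x ^2 + U2 x ^2 + U3 x ^2 = 1" for x
  proof (cases "nW x = 0")
    case True then show ?thesis by (simp add: U1_def U2_def U3_def)
  next
    case False
    then have "nW x ^2 = W1 x ^2 + W2 x ^2 + W3 x ^2" using nW_le[of x] by (simp add: nW_def)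
    moreover have ne: "W1 x ^2 + W2 x ^2 + W3 x ^2 \<noteq> 0" using False by (simp add: nW_def)
    ultimately show ?thesis using False by (simp add: U1_def U2_def U3_def power_divide add_divide_distrib[symmetric])
  qed
  have UW: "nW x * U1 x = W1 x" "nW x * U2 x = W2 x" "nW x * U3 x = W3 x" for x
  proof -
    have z: "nW x = 0 \<Longrightarrow> W1 x = 0 \<and> W2 x = 0 \<and> W3 x = 0"
      by (simp add: nW_def add_nonneg_eq_0_iff)
    show "nW x * U1 x = W1 x" "nW x * U2 x = W2 x" "nW x * U3 x = W3 x"
      using z by (auto simp: U1_def U2_def U3_def)
  qed
  have [measurable]: "nW \<in> borel_measurable borel" "U1 \<in> borel_measurable borel" "U2 \<in> borel_measurable borel" "U3 \<in> borel_measurable borel"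
    unfolding nW_def U1_def U2_def U3_def by measurable
  define sg :: "bool \<Rightarrow> real" where "sg b = (if b then 1 else -1)" for b
  define Fm :: "real \<times> bool \<Rightarrow> quat" where
    "Fm w = (cos (fst w), (sg (snd w) * U1 (fst w)) * sin (fst w), (sg (snd w) * U2 (fst w)) * sin (fst w), (sg (snd w) * U3 (fst w)) * sin (fst w))" for w
  define wt :: "real \<times> bool \<Rightarrow> real" where
    "wt w = a0 * (if snd w then (1 + nW (fst w)) / 2 else (1 - nW (fst w)) / 2)" for w
  have wt_nn: "0 \<le> wt w" for w using nW_le[of "fst w"] a0 by (simp add: wt_def)
  have wt_le: "wt w \<le> a0" for w using nW_le[of "fst w"] a0 by (simp add: wt_def)
  have sgU: "(sg b * U1 x)^2 + (sg b * U2 x)^2 + (sg b * U3 x)^2 = 1" for b x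
    using Uunit[of x] by (simp add: sg_def power_mult_distrib)
  define P where "P = L \<Otimes>\<^sub>M count_space (UNIV :: bool set)"
  have SP: "sets P = sets (borel \<Otimes>\<^sub>M count_space (UNIV :: bool set))"
    unfolding P_def by (rule sets_pair_measure_cong) auto
  have mP: "f \<in> measurable P N \<longleftrightarrow> f \<in> measurable (borel \<Otimes>\<^sub>M count_space (UNIV :: bool set)) N" for f and N :: "'x measure"
    by (metis measurable_cong_sets[OF SP refl])
  have spP: "space P = UNIV" unfolding P_def by (simp add: space_pair_measure)
  have UP: "UNIV \<in> sets P" using sets.top[of P] spP by simp
  have [measurable]: "Fm \<in> borel_measurable (borel \<Otimes>\<^sub>M count_space (UNIV :: bool set))"
    unfolding Fm_def sg_def by measurable
  have [measurable]: "wt \<in> borel_measurable (borel \<Otimes>\<^sub>M count_space (UNIV :: bool set))"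
    unfolding wt_def by measurable
  interpret Pfin: finite_measure P unfolding P_def
    by (rule finite_measure_pair_measure) (auto intro: L.finite_measure_axioms finite_measure_count_space)
  interpret pair_sigma_finite L "count_space (UNIV :: bool set)"
    by (intro pair_sigma_finite.intro L.sigma_finite_measure_axioms sigma_finite_measure_count_space_finite) simp
  define \<Omega> where "\<Omega> = density P (\<lambda>w. ennreal (wt w))"
  define \<mu> where "\<mu> = distr \<Omega> borel Fm"
  have SO: "sets \<Omega> = sets P" by (simp add: \<Omega>_def)
  have mO: "f \<in> measurable \<Omega> N \<longleftrightarrow> f \<in> measurable (borel \<Otimes>\<^sub>M count_space (UNIV :: bool set)) N" for f and N :: "'x measure"
    by (metis measurable_cong_sets[OF SO refl] mP)
  have Fm_unit: "norm (Fm w) = 1" for w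
    unfolding Fm_def by (rule norm_circle[OF sgU])
  show ?thesis
  proof (intro exI[of _ \<mu>] conjI allI)
    show "sets \<mu> = sets borel" by (simp add: \<mu>_def)
    show "emeasure \<mu> (- qsphere) = 0"
    proof -
      have "Fm -` (- qsphere) \<inter> space \<Omega> = {}" using Fm_unit unfolding in_qsphere[symmetric] by blast
      moreover have "- qsphere \<in> sets borel" by (intro borel_open open_Compl closed_qsphere)
      ultimately show ?thesis unfolding \<mu>_def by (subst emeasure_distr) (auto simp: mO)
    qed
    show "finite_measure \<mu>"
    proof (rule finite_measureI)
      have "emeasure \<mu> (space \<mu>) = emeasure \<Omega> (space \<Omega>)"
        unfolding \<mu>_def by (subst emeasure_distr) (auto simp: mO)
      also have "\<dots> = (\<integral>\<^sup>+w. ennreal (wt w) \<partial>P)"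
        unfolding \<Omega>_def by (subst emeasure_density) (auto simp: mP spP UP intro!: nn_integral_cong)
      also have "\<dots> \<le> (\<integral>\<^sup>+w. ennreal a0 \<partial>P)"
        by (intro nn_integral_mono) (simp add: wt_le ennreal_leI)
      also have "\<dots> < \<infinity>" by (simp add: Pfin.emeasure_eq_measure spP ennreal_mult_less_top)
      finally show "emeasure \<mu> (space \<mu>) \<noteq> \<infinity>" by simp
    qed
  next
    fix n :: int
    have pt: "(\<Sum>b\<in>UNIV. wt (t, b) *\<^sub>R qpowi (Fm (t, b)) n) =
       a0 *\<^sub>R (cos (of_int n * t), W1 t * sin (of_int n * t), W2 t * sin (of_int n * t), W3 t * sin (of_int n * t))" for t
    proof -
      have "(\<Sum>b\<in>UNIV. wt (t, b) *\<^sub>R qpowi (Fm (t, b)) n) = wt (t, True) *\<^sub>R qpowi (Fm (t, True)) n + wt (t, False) *\<^sub>R qpowi (Fm (t, False)) n"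
        by (simp add: UNIV_bool)
      also have "\<dots> = a0 *\<^sub>R (cos (of_int n * t), (nW t * U1 t) * sin (of_int n * t), (nW t * U2 t) * sin (of_int n * t), (nW t * U3 t) * sin (of_int n * t))"
        unfolding Fm_def fst_conv snd_conv qpowi_circle[OF sgU]
        by (simp add: wt_def sg_def algebra_simps add_divide_distrib diff_divide_distrib)
      finally show ?thesis by (simp add: UW)
    qed
    have mq: "(\<lambda>s. qpowi s n) \<in> borel_measurable borel" by measurable
    have intP: "integrable P (\<lambda>w. wt w *\<^sub>R qpowi (Fm w) n)"
    proof (rule Pfin.integrable_const_bound[where B=a0])
      show "AE w in P. norm (wt w *\<^sub>R qpowi (Fm w) n) \<le> a0"
        using wt_nn wt_le by (auto simp: qnorm_qpowi[OF Fm_unit])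
      show "(\<lambda>w. wt w *\<^sub>R qpowi (Fm w) n) \<in> borel_measurable P" by (simp add: mP)
    qed
    have "integral\<^sup>L \<mu> (\<lambda>s. qpowi s n) = integral\<^sup>L \<Omega> (\<lambda>w. qpowi (Fm w) n)"
      unfolding \<mu>_def by (rule integral_distr) (auto simp: mO)
    also have "\<dots> = integral\<^sup>L P (\<lambda>w. wt w *\<^sub>R qpowi (Fm w) n)"
      unfolding \<Omega>_def by (rule integral_density) (auto simp: mP wt_nn)
    also have "\<dots> = (\<integral>t. (\<integral>b. wt (t, b) *\<^sub>R qpowi (Fm (t, b)) n \<partial>count_space UNIV) \<partial>L)"
      using integral_fst'[OF intP[unfolded P_def]] by (simp add: P_def)
    also have "\<dots> = (\<integral>t. a0 *\<^sub>R (cos (of_int n * t), W1 t * sin (of_int n * t), W2 t * sin (of_int n * t), W3 t * sin (of_int n * t)) \<partial>L)"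
      by (simp add: lebesgue_integral_count_space_finite pt)
    also have "\<dots> = a0 *\<^sub>R (\<integral>t. (cos (of_int n * t), W1 t * sin (of_int n * t), W2 t * sin (of_int n * t), W3 t * sin (of_int n * t)) \<partial>L)"
      by (rule integral_scaleR_right)
    also have "\<dots> = (a0 * integral\<^sup>L L (\<lambda>t. cos (of_int n * t)),
         a0 * integral\<^sup>L L (\<lambda>t. W1 t * sin (of_int n * t)), a0 * integral\<^sup>L L (\<lambda>t. W2 t * sin (of_int n * t)),
         a0 * integral\<^sup>L L (\<lambda>t. W3 t * sin (of_int n * t)))"
    proof -
      have "integrable L (\<lambda>t. (cos (of_int n * t), W1 t * sin (of_int n * t), W2 t * sin (of_int n * t), W3 t * sin (of_int n * t)))"
      proof (rule L.integrable_const_bound[where B=2])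
        show "AE x in L. norm (cos (of_int n * x), W1 x * sin (of_int n * x), W2 x * sin (of_int n * x), W3 x * sin (of_int n * x)) \<le> 2"
        proof (rule AE_I2)
          fix x
          have "norm (cos (of_int n * x), W1 x * sin (of_int n * x), W2 x * sin (of_int n * x), W3 x * sin (of_int n * x))
            = sqrt (cos (of_int n * x)^2 + (W1 x^2 + W2 x^2 + W3 x^2) * sin (of_int n * x)^2)"
            by (simp add: qnorm power_mult_distrib algebra_simps)
          also have "\<dots> \<le> sqrt 1"
          proof (rule real_sqrt_le_mono)
            have "(W1 x^2 + W2 x^2 + W3 x^2) * sin (of_int n * x)^2 \<le> 1 * sin (of_int n * x)^2"
              using Wb[of x] by (intro mult_right_mono) auto
            then show "cos (of_int n * x)^2 + (W1 x^2 + W2 x^2 + W3 x^2) * sin (of_int n * x)^2 \<le> 1"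
              using sin_cos_squared_add[of "of_int n * x"] by linarith
          qed
          also have "\<dots> \<le> 2" by simp
          finally show "norm (cos (of_int n * x), W1 x * sin (of_int n * x), W2 x * sin (of_int n * x), W3 x * sin (of_int n * x)) \<le> 2" .
        qed
        show "(\<lambda>t. (cos (of_int n * t), W1 t * sin (of_int n * t), W2 t * sin (of_int n * t), W3 t * sin (of_int n * t))) \<in> borel_measurable L"
          by simp
      qed
      then show ?thesis by (subst quat_integral) auto
    qed
    finally show "integral\<^sup>L \<mu> (\<lambda>s. qpowi s n) = (a0 * integral\<^sup>L L (\<lambda>t. cos (of_int n * t)),
         a0 * integral\<^sup>L L (\<lambda>t. W1 t * sin (of_int n * t)), a0 * integral\<^sup>L L (\<lambda>t. W2 t * sin (of_int n * t)),
         a0 * integral\<^sup>L L (\<lambda>t. W3 t * sin (of_int n * t)))" .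
  qed
qed


lemma TP_split: "TP N g h t = TP N g (\<lambda>_. 0) t + TP N (\<lambda>_. 0) h t"
  unfolding TP_def by (simp add: sum.distrib[symmetric])

lemma TP_scale_g: "TP N (\<lambda>m. c * g m) (\<lambda>_. 0) t = c * TP N g (\<lambda>_. 0) t"
  unfolding TP_def by (simp add: sum_distrib_left algebra_simps)

lemma TP_scale_h: "TP N (\<lambda>_. 0) (\<lambda>m. c * h m) t = c * TP N (\<lambda>_. 0) h t"
  unfolding TP_def by (simp add: sum_distrib_left algebra_simps)

lemma TP_add_h: "TP N (\<lambda>_. 0) (\<lambda>m. h1 m + h2 m) t = TP N (\<lambda>_. 0) h1 t + TP N (\<lambda>_. 0) h2 t"
  unfolding TP_def by (simp add: sum.distrib[symmetric] algebra_simps)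

lemma TP_lin:
  "TP N (\<lambda>m. r * g m) (\<lambda>m. q1 * h1 m + q2 * h2 m + q3 * h3 m) t =
     r * TP N g (\<lambda>_. 0) t + q1 * (TP N g h1 t - TP N g (\<lambda>_. 0) t) + q2 * (TP N g h2 t - TP N g (\<lambda>_. 0) t)
     + q3 * (TP N g h3 t - TP N g (\<lambda>_. 0) t)"
proof -
  have "TP N (\<lambda>m. r * g m) (\<lambda>m. q1 * h1 m + q2 * h2 m + q3 * h3 m) t
     = r * TP N g (\<lambda>_. 0) t + (q1 * TP N (\<lambda>_. 0) h1 t + q2 * TP N (\<lambda>_. 0) h2 t + q3 * TP N (\<lambda>_. 0) h3 t)"
    by (subst TP_split) (simp add: TP_scale_g TP_add_h TP_scale_h)
  moreover have "TP N g h1 t - TP N g (\<lambda>_. 0) t = TP N (\<lambda>_. 0) h1 t"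
    "TP N g h2 t - TP N g (\<lambda>_. 0) t = TP N (\<lambda>_. 0) h2 t"
    "TP N g h3 t - TP N g (\<lambda>_. 0) t = TP N (\<lambda>_. 0) h3 t"
    by (subst TP_split, simp)+
  ultimately show ?thesis by simp
qed

lemma rat_ball_bound:
  fixes w1 w2 w3 :: real
  assumes "\<And>q1 q2 q3 :: rat. 0 \<le> sqrt ((of_rat q1)^2 + (of_rat q2)^2 + (of_rat q3)^2) + of_rat q1 * w1 + of_rat q2 * w2 + of_rat q3 * w3"
  shows "w1^2 + w2^2 + w3^2 \<le> 1"
proof -
  have ex: "\<exists>Y :: nat \<Rightarrow> rat. (\<lambda>n. of_rat (Y n)) \<longlonglongrightarrow> y" for y :: real
  proof -
    have "y \<in> closure \<rat>" by (simp add: Rats_closure_real)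
    then obtain X where X: "\<forall>n. X n \<in> \<rat>" "X \<longlonglongrightarrow> y" by (auto simp: closure_sequential)
    have "\<forall>n. \<exists>q. X n = of_rat q" using X(1) by (auto simp: Rats_def)
    then obtain Y where "\<forall>n. X n = of_rat (Y n)" by metis
    then show ?thesis using X(2) by (intro exI[of _ Y]) (simp add: fun_eq_iff[symmetric])
  qed
  obtain Y1 where Y1: "(\<lambda>n. of_rat (Y1 n)) \<longlonglongrightarrow> - w1" using ex by blast
  obtain Y2 where Y2: "(\<lambda>n. of_rat (Y2 n)) \<longlonglongrightarrow> - w2" using ex by blast
  obtain Y3 where Y3: "(\<lambda>n. of_rat (Y3 n)) \<longlonglongrightarrow> - w3" using ex by blast
  define F where "F q1 q2 q3 = sqrt (q1^2 + q2^2 + q3^2) + q1 * w1 + q2 * w2 + q3 * w3" for q1 q2 q3 :: real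
  have "(\<lambda>n. F (of_rat (Y1 n)) (of_rat (Y2 n)) (of_rat (Y3 n))) \<longlonglongrightarrow> F (- w1) (- w2) (- w3)"
    unfolding F_def by (intro tendsto_intros Y1 Y2 Y3)
  moreover have "\<forall>n. 0 \<le> F (of_rat (Y1 n)) (of_rat (Y2 n)) (of_rat (Y3 n))"
    using assms by (simp add: F_def)
  ultimately have "0 \<le> F (- w1) (- w2) (- w3)" by (intro LIMSEQ_le_const) auto
  then have le: "w1^2 + w2^2 + w3^2 \<le> sqrt (w1^2 + w2^2 + w3^2)"
    by (simp add: F_def power2_eq_square)
  define S where "S = w1^2 + w2^2 + w3^2"
  have S0: "0 \<le> S" by (simp add: S_def)
  have "S \<le> sqrt S" using le by (simp add: S_def)
  then have "S^2 \<le> (sqrt S)^2" using S0 by (intro power_mono) auto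
  then have "S * S \<le> S" using S0 by (simp add: power2_eq_square)
  show ?thesis
  proof (rule ccontr)
    assume "\<not> w1^2 + w2^2 + w3^2 \<le> 1"
    then have "1 < S" by (simp add: S_def)
    then have "S * 1 < S * S" by (intro mult_strict_left_mono) auto
    then show False using \<open>S * S \<le> S\<close> by simp
  qed
qed

lemma RN_real:
  fixes L0 L1 :: "real measure"
  assumes L0: "real_distribution L0" and L1: "real_distribution L1"
    and le: "\<And>B. B \<in> sets borel \<Longrightarrow> emeasure L1 B \<le> ennreal 2 * emeasure L0 B"
  shows "\<exists>D. D \<in> borel_measurable borel \<and> (\<forall>x. 0 \<le> D x) \<and> integrable L0 D \<and>
     (\<forall>f::real\<Rightarrow>real. f \<in> borel_measurable borel \<longrightarrow> integral\<^sup>L L1 f = integral\<^sup>L L0 (\<lambda>x. D x * f x))"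
proof -
  interpret L0: real_distribution L0 by fact
  interpret L1: real_distribution L1 by fact
  have S0: "sets L0 = sets borel" and S1: "sets L1 = sets borel" by simp_all
  have ac: "absolutely_continuous L0 L1"
    unfolding absolutely_continuous_def
  proof
    fix B assume "B \<in> null_sets L0"
    then have B: "B \<in> sets borel" "emeasure L0 B = 0" by (auto simp: null_sets_def)
    then have "emeasure L1 B \<le> 0" using le[OF B(1)] by simp
    then show "B \<in> null_sets L1" using B S1 by (auto simp: null_sets_def)
  qed
  have sN: "sets L1 = sets L0" by simp
  obtain D where D: "D \<in> borel_measurable L0" "AE x in L0. RN_deriv L0 L1 x = ennreal (D x)" "\<And>x. 0 \<le> D x"
    using L0.real_RN_deriv[OF L1.finite_measure_axioms ac sN] by metis
  have Dm: "D \<in> borel_measurable borel" using D(1) by (metis measurable_cong_sets[OF S0 refl])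
  have Dme: "(\<lambda>x. ennreal (D x)) \<in> borel_measurable L0" by (rule measurable_compose[OF D(1) measurable_ennreal])
  have dens: "density L0 (\<lambda>x. ennreal (D x)) = L1"
  proof -
    have "density L0 (\<lambda>x. ennreal (D x)) = density L0 (RN_deriv L0 L1)"
      by (rule density_cong) (use D(1,2) Dme in \<open>auto intro: AE_symmetric\<close>)
    also have "\<dots> = L1" by (rule L0.density_RN_deriv[OF ac sN])
    finally show ?thesis .
  qed
  have intD: "integrable L0 D"
  proof (rule integrableI_nonneg)
    show "D \<in> borel_measurable L0" by fact
    show "AE x in L0. 0 \<le> D x" using D(3) by simp
    have "(\<integral>\<^sup>+x. ennreal (D x) \<partial>L0) = emeasure (density L0 (\<lambda>x. ennreal (D x))) (space L0)"
      by (subst emeasure_density) (auto simp: D(1) Dme intro!: nn_integral_cong)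
    also have "\<dots> = emeasure L1 (space L1)" using dens by simp
    finally show "(\<integral>\<^sup>+x. ennreal (D x) \<partial>L0) < \<infinity>" using L1.emeasure_space_1 by simp
  qed
  show ?thesis
  proof (intro exI[of _ D] conjI allI impI Dm intD)
    show "0 \<le> D x" for x using D(3) by simp
    fix f :: "real \<Rightarrow> real" assume "f \<in> borel_measurable borel"
    then have fm: "f \<in> borel_measurable L0" by (metis measurable_cong_sets[OF S0 refl])
    show "integral\<^sup>L L1 f = integral\<^sup>L L0 (\<lambda>x. D x * f x)"
      unfolding dens[symmetric] by (subst integral_density) (auto simp: fm D(1,3))
  qed
qed


lemma bcn_cont: "bcn f \<Longrightarrow> continuous_on UNIV f"
  unfolding bcn_def by (auto intro: continuous_at_imp_continuous_on)

lemma bcn_meas: "bcn f \<Longrightarrow> f \<in> borel_measurable borel"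
  by (intro borel_measurable_continuous_onI bcn_cont)

lemma bcn_int: assumes "bcn f" "finite_measure M" "sets M = sets borel" shows "integrable M f"
proof -
  interpret finite_measure M by fact
  obtain B where B: "\<And>x. \<bar>f x\<bar> \<le> B" using assms(1) unfolding bcn_def by blast
  show ?thesis
    by (rule integrable_const_bound[where B=B]) (use B bcn_meas[OF assms(1)] assms(3) in \<open>auto simp: measurable_cong_sets[OF assms(3) refl]\<close>)
qed

lemma bcn_int_mult: assumes "bcn f" "integrable M D" "sets M = sets borel" shows "integrable M (\<lambda>x. D x * f x)"
proof -
  obtain B where B: "\<And>x. \<bar>f x\<bar> \<le> B" using assms(1) unfolding bcn_def by blast
  have fm: "f \<in> borel_measurable M" using bcn_meas[OF assms(1)] by (metis measurable_cong_sets[OF assms(3) refl])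
  show ?thesis
    by (rule Bochner_Integration.integrable_bound[where f="\<lambda>x. B * D x"])
       (use assms(2) B fm in \<open>auto simp: abs_mult mult.commute[of "\<bar>B\<bar>"] intro!: AE_I2 mult_left_mono[OF order_trans[OF _ abs_ge_self]]\<close>)
qed

lemma hard_pos:
  assumes pd: "positive_definite \<phi>" and a0pos: "qa \<phi> 0 > 0"
  shows "\<exists>\<mu>::quat measure. sets \<mu> = sets borel \<and> finite_measure \<mu> \<and> emeasure \<mu> (- qsphere) = 0 \<and>
     (\<forall>n. \<phi> n = integral\<^sup>L \<mu> (\<lambda>s. qpowi s n))"
proof -
  define a where "a = qa \<phi>"
  define a0 where "a0 = a 0"
  have a0: "a0 > 0" using a0pos by (simp add: a0_def a_def)
  have ev: "a (-m) = a m" for m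
    using pd_sym[OF pd, of m] by (simp add: a_def qa_def qconj_eq)
  have od1: "qv1 \<phi> (-m) = - qv1 \<phi> m" for m using pd_sym[OF pd, of m] by (simp add: qv1_def qconj_eq)
  have od2: "qv2 \<phi> (-m) = - qv2 \<phi> m" for m using pd_sym[OF pd, of m] by (simp add: qv2_def qconj_eq)
  have od3: "qv3 \<phi> (-m) = - qv3 \<phi> m" for m using pd_sym[OF pd, of m] by (simp add: qv3_def qconj_eq)
  define H :: "nat \<Rightarrow> int \<Rightarrow> real" where
    "H c = (if c = 1 then qv1 \<phi> else if c = 2 then qv2 \<phi> else if c = 3 then qv3 \<phi> else (\<lambda>_. 0))" for c
  have Hod: "H c (-m) = - H c m" for c m by (simp add: H_def od1 od2 od3)
  define T where "T N c t = TP N a (H c) t" for N c t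
  have KEYN: "0 \<le> sqrt (w1^2+w2^2+w3^2) * T N 0 t + w1 * (T N 1 t - T N 0 t) + w2 * (T N 2 t - T N 0 t) + w3 * (T N 3 t - T N 0 t)"
    for N t w1 w2 w3
    using fejer_vec[OF pd, of N w1 w2 w3 t] unfolding TP_lin by (simp add: T_def H_def a_def)
  have pos: "0 \<le> T N c t" for N c t
  proof -
    have "0 \<le> T N 1 t" using KEYN[of 1 0 0 N t] by simp
    moreover have "0 \<le> T N 2 t" using KEYN[of 0 1 0 N t] by simp
    moreover have "0 \<le> T N 3 t" using KEYN[of 0 0 1 N t] by simp
    moreover have "0 \<le> T N 0 t" using KEYN[of "-1" 0 0 N t] \<open>0 \<le> T N 1 t\<close> by simp
    moreover have "c \<notin> {1,2,3} \<Longrightarrow> T N c t = T N 0 t" by (simp add: T_def H_def)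
    ultimately show ?thesis by (cases "c \<in> {1,2,3}") auto
  qed
  have posTP: "0 \<le> TP N a (H c) t" for N c t using pos[of N c t] by (simp add: T_def)
  define \<mu>s where "\<mu>s c N = Pm (Suc N) a (H c)" for c N
  have tight: "tight (\<mu>s c)" for c
    unfolding \<mu>s_def by (rule Pm_tight) (use posTP a0 ev in \<open>auto simp: a0_def\<close>)
  obtain r \<Lambda> where r: "strict_mono r" and \<Lambda>: "\<And>c. c < 4 \<Longrightarrow> real_distribution (\<Lambda> c) \<and> wconv (\<mu>s c \<circ> r) (\<Lambda> c)"
    using helly_multi[of 4 \<mu>s] tight by blast
  have rd: "real_distribution (\<Lambda> c)" if "c < 4" for c using \<Lambda>[OF that] by simp
  have wc: "wconv (\<mu>s c \<circ> r) (\<Lambda> c)" if "c < 4" for c using \<Lambda>[OF that] by simp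
  have sm: "strict_mono (\<lambda>k. Suc (r k))" using r by (simp add: strict_mono_def)
  have cntr: "(\<lambda>k. cnt (Suc (r k)) n / real (Suc (r k))) \<longlonglongrightarrow> 1" for n
    using LIMSEQ_subseq_LIMSEQ[OF cnt_lim sm] by (simp add: comp_def)
  have mom_cos: "integral\<^sup>L (\<Lambda> c) (\<lambda>t. cos (of_int n * t)) = a n / a0" if c: "c < 4" for c n
  proof -
    have l1: "(\<lambda>k. integral\<^sup>L (\<mu>s c (r k)) (\<lambda>t. cos (of_int n * t))) \<longlonglongrightarrow> integral\<^sup>L (\<Lambda> c) (\<lambda>t. cos (of_int n * t))"
    proof -
      have "\<forall>x. isCont (\<lambda>t::real. cos (of_int n * t)) x" by (auto intro: continuous_intros)
      moreover have "\<forall>x::real. \<bar>cos (of_int n * x)\<bar> \<le> 1" by simp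
      ultimately show ?thesis using wc[OF c] unfolding wconv_def comp_def by blast
    qed
    have e: "integral\<^sup>L (\<mu>s c (r k)) (\<lambda>t. cos (of_int n * t)) = cnt (Suc (r k)) n / real (Suc (r k)) * (a n / a0)" for k
      unfolding \<mu>s_def by (subst Pm_cos) (use posTP a0 ev in \<open>auto simp: a0_def\<close>)
    have l2: "(\<lambda>k. integral\<^sup>L (\<mu>s c (r k)) (\<lambda>t. cos (of_int n * t))) \<longlonglongrightarrow> 1 * (a n / a0)"
      unfolding e by (intro tendsto_mult cntr tendsto_const)
    show ?thesis using LIMSEQ_unique[OF l1 l2] by simp
  qed
  have mom_sin: "integral\<^sup>L (\<Lambda> c) (\<lambda>t. sin (of_int n * t)) = H c n / a0" if c: "c < 4" for c n
  proof -
    have l1: "(\<lambda>k. integral\<^sup>L (\<mu>s c (r k)) (\<lambda>t. sin (of_int n * t))) \<longlonglongrightarrow> integral\<^sup>L (\<Lambda> c) (\<lambda>t. sin (of_int n * t))"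
    proof -
      have "\<forall>x. isCont (\<lambda>t::real. sin (of_int n * t)) x" by (auto intro: continuous_intros)
      moreover have "\<forall>x::real. \<bar>sin (of_int n * x)\<bar> \<le> 1" by simp
      ultimately show ?thesis using wc[OF c] unfolding wconv_def comp_def by blast
    qed
    have e: "integral\<^sup>L (\<mu>s c (r k)) (\<lambda>t. sin (of_int n * t)) = cnt (Suc (r k)) n / real (Suc (r k)) * (H c n / a0)" for k
      unfolding \<mu>s_def by (subst Pm_sin) (use posTP a0 Hod in \<open>auto simp: a0_def\<close>)
    have l2: "(\<lambda>k. integral\<^sup>L (\<mu>s c (r k)) (\<lambda>t. sin (of_int n * t))) \<longlonglongrightarrow> 1 * (H c n / a0)"
      unfolding e by (intro tendsto_mult cntr tendsto_const)
    show ?thesis using LIMSEQ_unique[OF l1 l2] by simp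
  qed
  define I where "I c (f::real \<Rightarrow> real) = integral\<^sup>L (\<Lambda> c) f" for c f
  have TEST: "0 \<le> sqrt (q1^2+q2^2+q3^2) * I 0 f + q1 * (I 1 f - I 0 f) + q2 * (I 2 f - I 0 f) + q3 * (I 3 f - I 0 f)"
    if f: "bcn f" for f q1 q2 q3
  proof -
    define \<rho> where "\<rho> = sqrt (q1^2+q2^2+q3^2)"
    define J where "J k c = integral\<^sup>L (\<mu>s c (r k)) f" for k c
    have fc: "continuous_on UNIV f" by (rule bcn_cont[OF f])
    obtain B where fB: "\<forall>x. \<bar>f x\<bar> \<le> B" and fic: "\<forall>x. isCont f x" and fnn: "\<And>x. 0 \<le> f x"
      using f unfolding bcn_def by blast
    have lim: "(\<lambda>k. J k c) \<longlonglongrightarrow> I c f" if "c < 4" for c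
      using wc[OF that] fB fic unfolding wconv_def comp_def J_def I_def by blast
    have fin: "0 \<le> \<rho> * J k 0 + q1 * (J k 1 - J k 0) + q2 * (J k 2 - J k 0) + q3 * (J k 3 - J k 0)" for k
    proof -
      define N where "N = Suc (r k)"
      define C where "C = 2 * pi * real N * a0"
      have C: "C > 0" using a0 by (simp add: C_def N_def)
      define G where "G c = integral {-pi..pi} (\<lambda>t. T N c t * f t)" for c
      have JG: "J k c = G c / C" for c
        unfolding J_def \<mu>s_def G_def C_def N_def T_def
        by (subst integral_Pm) (use posTP a0 fc in \<open>auto simp: a0_def\<close>)
      have hG: "((\<lambda>t. T N c t * f t) has_integral G c) {-pi..pi}" for c
        unfolding G_def T_def
        by (intro integrable_integral integrable_continuous_interval continuous_intros continuous_TP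
            continuous_on_subset[OF fc]) auto
      have "((\<lambda>t. \<rho> * (T N 0 t * f t) + q1 * (T N 1 t * f t - T N 0 t * f t) + q2 * (T N 2 t * f t - T N 0 t * f t)
            + q3 * (T N 3 t * f t - T N 0 t * f t)) has_integral
            (\<rho> * G 0 + q1 * (G 1 - G 0) + q2 * (G 2 - G 0) + q3 * (G 3 - G 0))) {-pi..pi}"
        by (intro has_integral_add has_integral_diff has_integral_mult_right hG)
      then have "0 \<le> \<rho> * G 0 + q1 * (G 1 - G 0) + q2 * (G 2 - G 0) + q3 * (G 3 - G 0)"
      proof (rule has_integral_nonneg)
        fix t
        have "\<rho> * (T N 0 t * f t) + q1 * (T N 1 t * f t - T N 0 t * f t) + q2 * (T N 2 t * f t - T N 0 t * f t)
            + q3 * (T N 3 t * f t - T N 0 t * f t)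
          = (\<rho> * T N 0 t + q1 * (T N 1 t - T N 0 t) + q2 * (T N 2 t - T N 0 t) + q3 * (T N 3 t - T N 0 t)) * f t"
          by (simp add: algebra_simps)
        also have "0 \<le> \<dots>" using KEYN[of q1 q2 q3 N t] fnn[of t] by (simp add: \<rho>_def)
        finally show "0 \<le> \<rho> * (T N 0 t * f t) + q1 * (T N 1 t * f t - T N 0 t * f t) + q2 * (T N 2 t * f t - T N 0 t * f t)
            + q3 * (T N 3 t * f t - T N 0 t * f t)" .
      qed
      then have "0 \<le> (\<rho> * G 0 + q1 * (G 1 - G 0) + q2 * (G 2 - G 0) + q3 * (G 3 - G 0)) / C" using C by simp
      also have "\<dots> = \<rho> * J k 0 + q1 * (J k 1 - J k 0) + q2 * (J k 2 - J k 0) + q3 * (J k 3 - J k 0)"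
        unfolding JG using C by (simp add: field_simps)
      finally show ?thesis .
    qed
    have "(\<lambda>k. \<rho> * J k 0 + q1 * (J k 1 - J k 0) + q2 * (J k 2 - J k 0) + q3 * (J k 3 - J k 0)) \<longlonglongrightarrow>
        \<rho> * I 0 f + q1 * (I 1 f - I 0 f) + q2 * (I 2 f - I 0 f) + q3 * (I 3 f - I 0 f)"
      by (intro tendsto_intros lim) auto
    then show ?thesis using fin unfolding \<rho>_def[symmetric] by (intro LIMSEQ_le_const) auto
  qed
  have rd0: "real_distribution (\<Lambda> 0)" by (rule rd) simp
  interpret L0: real_distribution "\<Lambda> 0" by (rule rd0)
  have S0: "sets (\<Lambda> 0) = sets borel" by simp
  have le2: "emeasure (\<Lambda> c) B \<le> ennreal 2 * emeasure (\<Lambda> 0) B" if c: "c \<in> {1,2,3}" and B: "B \<in> sets borel" for c B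
  proof -
    interpret Lc: real_distribution "\<Lambda> c" by (rule rd) (use c in auto)
    show ?thesis
    proof (rule pos_le[OF _ S0 Lc.finite_measure_axioms L0.finite_measure_axioms _ _ B])
      show "sets (\<Lambda> c) = sets borel" by simp
      show "(0::real) \<le> 2" by simp
      fix f assume f: "bcn f"
      have "I c f \<le> 2 * I 0 f"
      proof -
        consider "c = 1" | "c = 2" | "c = 3" using c by auto
        then show ?thesis
        proof cases
          case 1 then show ?thesis using TEST[OF f, of "-1" 0 0] by simp
        next
          case 2 then show ?thesis using TEST[OF f, of 0 "-1" 0] by simp
        next
          case 3 then show ?thesis using TEST[OF f, of 0 0 "-1"] by simp
        qed
      qed
      then show "integral\<^sup>L (\<Lambda> c) f \<le> 2 * integral\<^sup>L (\<Lambda> 0) f" by (simp add: I_def)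
    qed
  qed
  have "\<forall>c. \<exists>D. c \<in> {1,2,3} \<longrightarrow> (D \<in> borel_measurable borel \<and> (\<forall>x. 0 \<le> D x) \<and> integrable (\<Lambda> 0) D \<and>
     (\<forall>f::real\<Rightarrow>real. f \<in> borel_measurable borel \<longrightarrow> integral\<^sup>L (\<Lambda> c) f = integral\<^sup>L (\<Lambda> 0) (\<lambda>x. D x * f x)))"
  proof
    fix c show "\<exists>D. c \<in> {1,2,3} \<longrightarrow> (D \<in> borel_measurable borel \<and> (\<forall>x. 0 \<le> D x) \<and> integrable (\<Lambda> 0) D \<and>
     (\<forall>f::real\<Rightarrow>real. f \<in> borel_measurable borel \<longrightarrow> integral\<^sup>L (\<Lambda> c) f = integral\<^sup>L (\<Lambda> 0) (\<lambda>x. D x * f x)))"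
    proof (cases "c \<in> {1,2,3}")
      case True
      have "real_distribution (\<Lambda> c)" by (rule rd) (use True in auto)
      from RN_real[OF rd0 this le2[OF True]] show ?thesis by blast
    qed simp
  qed
  then obtain D where D: "\<And>c. c \<in> {1,2,3} \<Longrightarrow> D c \<in> borel_measurable borel \<and> (\<forall>x. 0 \<le> D c x) \<and> integrable (\<Lambda> 0) (D c) \<and>
     (\<forall>f::real\<Rightarrow>real. f \<in> borel_measurable borel \<longrightarrow> integral\<^sup>L (\<Lambda> c) f = integral\<^sup>L (\<Lambda> 0) (\<lambda>x. D c x * f x))"
    by metis
  have Dm[measurable]: "D 1 \<in> borel_measurable borel" "D 2 \<in> borel_measurable borel" "D 3 \<in> borel_measurable borel"
    using D by auto
  have Di: "integrable (\<Lambda> 0) (D c)" if "c \<in> {1,2,3}" for c using D[OF that] by blast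
  have DI: "I c f = integral\<^sup>L (\<Lambda> 0) (\<lambda>x. D c x * f x)" if "c \<in> {1,2,3}" "f \<in> borel_measurable borel" for c f
    using D[OF that(1)] that(2) by (simp add: I_def)
  define w where "w c x = D c x - 1" for c x
  have AEq: "AE x in \<Lambda> 0. 0 \<le> sqrt ((of_rat q1)^2 + (of_rat q2)^2 + (of_rat q3)^2) + of_rat q1 * w 1 x + of_rat q2 * w 2 x + of_rat q3 * w 3 x"
    for q1 q2 q3 :: rat
  proof (rule ae_nonneg_from_tests[OF S0 L0.finite_measure_axioms])
    define \<rho> :: real where "\<rho> = sqrt ((of_rat q1)^2 + (of_rat q2)^2 + (of_rat q3)^2)"
    show "integrable (\<Lambda> 0) (\<lambda>x. sqrt ((of_rat q1)^2 + (of_rat q2)^2 + (of_rat q3)^2) + of_rat q1 * w 1 x + of_rat q2 * w 2 x + of_rat q3 * w 3 x)"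
      unfolding w_def using Di by auto
    fix f assume f: "bcn f"
    have fi: "integrable (\<Lambda> 0) f" by (rule bcn_int[OF f L0.finite_measure_axioms S0])
    have dfi: "integrable (\<Lambda> 0) (\<lambda>x. D c x * f x)" if "c \<in> {1,2,3}" for c
      by (rule bcn_int_mult[OF f Di[OF that] S0])
    have fm: "f \<in> borel_measurable borel" by (rule bcn_meas[OF f])
    have "integral\<^sup>L (\<Lambda> 0) (\<lambda>x. f x * (\<rho> + of_rat q1 * w 1 x + of_rat q2 * w 2 x + of_rat q3 * w 3 x))
      = integral\<^sup>L (\<Lambda> 0) (\<lambda>x. \<rho> * f x + of_rat q1 * (D 1 x * f x - f x) + of_rat q2 * (D 2 x * f x - f x) + of_rat q3 * (D 3 x * f x - f x))"
      by (rule Bochner_Integration.integral_cong) (auto simp: w_def algebra_simps)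
    also have "\<dots> = \<rho> * I 0 f + of_rat q1 * (I 1 f - I 0 f) + of_rat q2 * (I 2 f - I 0 f) + of_rat q3 * (I 3 f - I 0 f)"
      using fi dfi[of 1] dfi[of 2] dfi[of 3] DI[of 1 f] DI[of 2 f] DI[of 3 f] fm
      by (simp add: I_def)
    finally show "0 \<le> integral\<^sup>L (\<Lambda> 0) (\<lambda>x. f x * (sqrt ((of_rat q1)^2 + (of_rat q2)^2 + (of_rat q3)^2) + of_rat q1 * w 1 x + of_rat q2 * w 2 x + of_rat q3 * w 3 x))"
      using TEST[OF f, of "of_rat q1" "of_rat q2" "of_rat q3"] by (simp add: \<rho>_def)
  qed
  have AEb: "AE x in \<Lambda> 0. (w 1 x)^2 + (w 2 x)^2 + (w 3 x)^2 \<le> 1"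
  proof -
    have "AE x in \<Lambda> 0. \<forall>q :: rat \<times> rat \<times> rat. 0 \<le> sqrt ((of_rat (fst q))^2 + (of_rat (fst (snd q)))^2 + (of_rat (snd (snd q)))^2)
         + of_rat (fst q) * w 1 x + of_rat (fst (snd q)) * w 2 x + of_rat (snd (snd q)) * w 3 x"
      unfolding AE_all_countable using AEq by blast
    then show ?thesis
    proof eventually_elim
      case (elim x)
      show ?case
        by (rule rat_ball_bound) (use elim in \<open>auto dest: spec[of _ "(_, _, _)"]\<close>)
    qed
  qed
  define W where "W c x = (if (w 1 x)^2 + (w 2 x)^2 + (w 3 x)^2 \<le> 1 then w c x else 0)" for c x
  have Wm: "W 1 \<in> borel_measurable borel" "W 2 \<in> borel_measurable borel" "W 3 \<in> borel_measurable borel"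
    unfolding W_def w_def by measurable
  have Wb: "(W 1 x)^2 + (W 2 x)^2 + (W 3 x)^2 \<le> 1" for x by (simp add: W_def)
  have WAE: "AE x in \<Lambda> 0. W c x = w c x" for c using AEb by eventually_elim (simp add: W_def)
  obtain \<mu> :: "quat measure" where \<mu>: "sets \<mu> = sets borel" "finite_measure \<mu>" "emeasure \<mu> (- qsphere) = 0"
    "\<And>n. integral\<^sup>L \<mu> (\<lambda>s. qpowi s n) = (a0 * integral\<^sup>L (\<Lambda> 0) (\<lambda>t. cos (of_int n * t)),
         a0 * integral\<^sup>L (\<Lambda> 0) (\<lambda>t. W 1 t * sin (of_int n * t)), a0 * integral\<^sup>L (\<Lambda> 0) (\<lambda>t. W 2 t * sin (of_int n * t)),
         a0 * integral\<^sup>L (\<Lambda> 0) (\<lambda>t. W 3 t * sin (of_int n * t)))"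
    using final_construct[OF rd0 a0 Wm Wb] by blast
  have sinW: "a0 * integral\<^sup>L (\<Lambda> 0) (\<lambda>t. W c t * sin (of_int n * t)) = H c n" if c: "c \<in> {1,2,3}" for c n
  proof -
    have sm: "(\<lambda>t::real. sin (of_int n * t)) \<in> borel_measurable borel" by measurable
    have Dcm: "D c \<in> borel_measurable borel" using D[OF c] by blast
    have i1: "integrable (\<Lambda> 0) (\<lambda>t. D c t * sin (of_int n * t))"
      by (rule Bochner_Integration.integrable_bound[where f="D c"])
         (use Di[OF c] Dcm sm D[OF c] in \<open>auto simp: abs_mult measurable_cong_sets[OF S0 refl] intro!: AE_I2 mult_left_le\<close>)
    have i2: "integrable (\<Lambda> 0) (\<lambda>t. sin (of_int n * t))"
      by (rule L0.integrable_const_bound[where B=1]) (use sm in \<open>auto simp: measurable_cong_sets[OF S0 refl]\<close>)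
    have "integral\<^sup>L (\<Lambda> 0) (\<lambda>t. W c t * sin (of_int n * t)) = integral\<^sup>L (\<Lambda> 0) (\<lambda>t. w c t * sin (of_int n * t))"
    proof (rule integral_cong_AE)
      show "(\<lambda>t. W c t * sin (of_int n * t)) \<in> borel_measurable (\<Lambda> 0)"
        using Wm c sm by (auto simp: measurable_cong_sets[OF S0 refl])
      show "(\<lambda>t. w c t * sin (of_int n * t)) \<in> borel_measurable (\<Lambda> 0)"
        using Dcm sm by (auto simp: w_def measurable_cong_sets[OF S0 refl])
      show "AE t in \<Lambda> 0. W c t * sin (of_int n * t) = w c t * sin (of_int n * t)"
        using WAE[of c] by eventually_elim simp
    qed
    also have "\<dots> = integral\<^sup>L (\<Lambda> 0) (\<lambda>t. D c t * sin (of_int n * t)) - integral\<^sup>L (\<Lambda> 0) (\<lambda>t. sin (of_int n * t))"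
      unfolding w_def left_diff_distrib using i1 i2 by simp
    also have "\<dots> = I c (\<lambda>t. sin (of_int n * t)) - I 0 (\<lambda>t. sin (of_int n * t))"
      using DI[OF c sm] by (simp add: I_def)
    also have "\<dots> = H c n / a0 - H 0 n / a0"
      unfolding I_def using mom_sin[of c n] mom_sin[of 0 n] c by auto
    also have "\<dots> = H c n / a0" by (simp add: H_def)
    finally show ?thesis using a0 by simp
  qed
  show ?thesis
  proof (intro exI[of _ \<mu>] conjI allI \<mu>(1,2,3))
    fix n
    have "a0 * integral\<^sup>L (\<Lambda> 0) (\<lambda>t. cos (of_int n * t)) = a n" using mom_cos[of 0 n] a0 by simp
    then show "\<phi> n = integral\<^sup>L \<mu> (\<lambda>s. qpowi s n)"
      unfolding \<mu>(4) using sinW[of 1 n] sinW[of 2 n] sinW[of 3 n]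
      by (simp add: H_def a_def phi_split[of \<phi> n, symmetric])
  qed
qed

theorem mainTheorem9:
  fixes \<phi> :: "int \<Rightarrow> quat"
  shows "positive_definite \<phi> \<longleftrightarrow>
    (\<exists>\<mu> :: quat measure.
       sets \<mu> = sets borel \<and> finite_measure \<mu> \<and> emeasure \<mu> (- qsphere) = 0 \<and>
       (\<forall>n::int. \<phi> n = integral\<^sup>L \<mu> (\<lambda>s. qpowi s n)))"
proof
  assume pd: "positive_definite \<phi>"
  obtain r where r: "r \<ge> 0" "\<phi> 0 = (r,0,0,0)" using pd_zero[OF pd] by blast
  show "\<exists>\<mu> :: quat measure. sets \<mu> = sets borel \<and> finite_measure \<mu> \<and> emeasure \<mu> (- qsphere) = 0 \<and>
       (\<forall>n::int. \<phi> n = integral\<^sup>L \<mu> (\<lambda>s. qpowi s n))"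
  proof (cases "r = 0")
    case True
    then have "\<phi> 0 = 0" using r by (simp add: zero_prod_def)
    then have z: "\<phi> n = 0" for n by (rule pd_bound_zero[OF pd])
    show ?thesis
    proof (intro exI[of _ "null_measure borel"] conjI allI)
      show "finite_measure (null_measure (borel :: quat measure))" by (rule finite_measureI) simp
    qed (auto simp: z)
  next
    case False
    then have "qa \<phi> 0 > 0" using r by (simp add: qa_def)
    then show ?thesis by (rule hard_pos[OF pd])
  qed
next
  assume "\<exists>\<mu> :: quat measure. sets \<mu> = sets borel \<and> finite_measure \<mu> \<and> emeasure \<mu> (- qsphere) = 0 \<and>
       (\<forall>n::int. \<phi> n = integral\<^sup>L \<mu> (\<lambda>s. qpowi s n))"
  then obtain \<mu> :: "quat measure" where "sets \<mu> = sets borel" "finite_measure \<mu>" "emeasure \<mu> (- qsphere) = 0"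
    "\<And>n. \<phi> n = integral\<^sup>L \<mu> (\<lambda>s. qpowi s n)" by blast
  then show "positive_definite \<phi>" by (rule easy_direction)
qed


end
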